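(* Let $\Gamma$ be a gain operator on $\ell^\infty_+(\mathcal I)$. Assume there is $\rho\in\mathcal K_\infty$ such that $\Gamma_\rho$ satisfies the $\oplus$-MBI property and, for each $r\ge0$, the point $\sigma_{*,\rho}(r):=\bigoplus_{n=0}^\infty\hat\Gamma_\rho^n(r\mathbf 1)$ is a globally attractive fixed point of the operator $s\mapsto r\mathbf 1\oplus\Gamma_\rho(s)$ (i.e. every trajectory of this operator converges in norm to $\sigma_{*,\rho}(r)$). Then there exists a path of strict decay for $\Gamma$.
   Context: Let $\mathcal I$ be a nonempty countable index set; $\ell^\infty_+(\mathcal I)$ is the cone of nonnegative real families $s=(s_i)_{i\in\mathcal I}$ with $\|s\|:=\sup_i|s_i|<\infty$, ordered componentwise; $\mathbf 1$ is the all-ones vector; $\oplus$ is the componentwise maximum, $\bigoplus$ the componentwise supremum. $\mathcal K_\infty$: continuous strictly increasing unbounded $\gamma:\mathbb R_+\to\mathbb R_+$ with $\gamma(0)=0$, acting on $\ell^\infty_+(\mathcal I)$ componentwise. For $\mathcal J\subset\mathcal I$, $s_{|\mathcal J}$ agrees with $s$ on $\mathcal J$ and is $0$ elsewhere. Gain operator: for each $i$ a finite (possibly empty) $\mathcal I_i\subset\mathcal I\setminus\{i\}$; directed graph $\mathcal G$ with vertices $\mathcal I$ and edges $ji$, $j\in\mathcal I_i$; a pointwise equicontinuous family $\gamma_{ij}\in\mathcal K_\infty$ ($ji\in E(\mathcal G)$); functions $\mu_i:\ell^\infty_+(\mathcal I)\to[0,\infty]$ with (M1) some $\xi\in\mathcal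 K_\infty$ has $\mu_i(0)=0$, $\mu_i(s)\ge\xi(\|s\|)$; (M2) $\mu_i$ monotone; (M3) for each finite $\mathcal J$, $\mu_i$ restricted to vectors vanishing off $\mathcal J$ is finite-valued and continuous; (M4) for each norm-bounded $A$ and $\varepsilon>0$ there is $\delta>0$ with $\sup_i|\mu_i(s_{|\mathcal I_i})-\mu_i(s^0_{|\mathcal I_i})|\le\varepsilon$ whenever $s^0\in A$, $\|s-s^0\|\le\delta$. $\Gamma_i(s):=\mu_i([\gamma_{ij}(s_j)]_{j\in\mathcal I_i})$ (argument zero outside $\mathcal I_i$). $\Gamma_\rho:=(\mathrm{id}+\rho)\circ\Gamma$, $\hat\Gamma_\rho(s):=s\oplus\Gamma_\rho(s)$. A monotone $T$ has the $\oplus$-MBI property if there is $\varphi\in\mathcal K_\infty$ such that for all $s,b$, $s\le b\oplus T(s)$ implies $\|s\|\le\varphi(\|b\|)$. A path of strict decay for $\Gamma$ is a map $\sigma:\mathbb R_+\to\ell^\infty_+(\mathcal I)$ such that: (i) for some $\rho\in\mathcal K_\infty$, $\Gamma_\rho(\sigma(r))\le\sigma(r)$ for all $r\ge0$; (ii) $\varphi_{\min}(r)\mathbf 1\le\sigma(r)\le\varphi_{\max}(r)\mathbf 1$ for some $\varphi_{\min},\varphi_{\max}\in\mathcal K_\infty$; (iii) each $\sigma_i\in\mathcal K_\infty$; (iv) for each compact $K\subset(0,\infty)$ there are $0<l\le L$ with $l|r_1-r_2|\le|\sigma_i^{-1}(r_1)-\sigma_i^{-1}(r_2)|\le L|r_1-r_2|$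 for all $r_1,r_2\in K$, $i\in\mathcal I$. *)

theory Defs
  imports "HOL-Analysis.Analysis"
begin

definition linf_pos :: "('i \<Rightarrow> real) set" where
  "linf_pos = {s. (\<forall>i. 0 \<le> s i) \<and> bdd_above (range (\<lambda>i. \<bar>s i\<bar>))}"

definition supnorm :: "('i \<Rightarrow> real) \<Rightarrow> real" where
  "supnorm s = (SUP i. \<bar>s i\<bar>)"

definition oplus :: "('i \<Rightarrow> real) \<Rightarrow> ('i \<Rightarrow> real) \<Rightarrow> ('i \<Rightarrow> real)" where
  "oplus s t = (\<lambda>i. max (s i) (t i))"

definition restr :: "('i \<Rightarrow> real) \<Rightarrow> 'i set \<Rightarrow> ('i \<Rightarrow> real)" where
  "restr s J = (\<lambda>i. if i \<in> J then s i else 0)"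

definition Kinf :: "(real \<Rightarrow> real) \<Rightarrow> bool" where
  "Kinf g \<longleftrightarrow> continuous_on {0..} g \<and> strict_mono_on {0..} g \<and> g 0 = 0
      \<and> (\<forall>M. \<exists>x\<ge>0. M < g x)"

text \<open>Gain operator data: neighbour sets Ii, gains gam i j (for edge ji), functions mu i.\<close>
definition gain_operator ::
  "('i \<Rightarrow> 'i set) \<Rightarrow> ('i \<Rightarrow> 'i \<Rightarrow> real \<Rightarrow> real) \<Rightarrow> ('i \<Rightarrow> ('i \<Rightarrow> real) \<Rightarrow> ereal) \<Rightarrow> bool" where
  "gain_operator Ii gam mu \<longleftrightarrow>
     (\<forall>i. finite (Ii i) \<and> i \<notin> Ii i)
   \<and> (\<forall>i. \<forall>j\<in>Ii i. Kinf (gam i j))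
   \<and> (\<forall>r\<ge>0. \<forall>\<epsilon>>0. \<exists>\<delta>>0. \<forall>i. \<forall>j\<in>Ii i. \<forall>r'\<ge>0.
          \<bar>r' - r\<bar> < \<delta> \<longrightarrow> \<bar>gam i j r' - gam i j r\<bar> < \<epsilon>)
   \<and> (\<forall>i s. s \<in> linf_pos \<longrightarrow> 0 \<le> mu i s)
   \<comment> \<open>(M1)\<close>
   \<and> (\<exists>\<xi>. Kinf \<xi> \<and> (\<forall>i. mu i (\<lambda>_. 0) = 0 \<and>
          (\<forall>s\<in>linf_pos. ereal (\<xi> (supnorm s)) \<le> mu i s)))
   \<comment> \<open>(M2)\<close>
   \<and> (\<forall>i. \<forall>s\<in>linf_pos. \<forall>t\<in>linf_pos. (\<forall>k. s k \<le> t k) \<longrightarrow> mu i s \<le> mu i t)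
   \<comment> \<open>(M3)\<close>
   \<and> (\<forall>i J. finite J \<longrightarrow>
        (\<forall>s\<in>linf_pos. (\<forall>k. k \<notin> J \<longrightarrow> s k = 0) \<longrightarrow>
           mu i s \<noteq> \<infinity> \<and>
           (\<forall>\<epsilon>>0. \<exists>\<delta>>0. \<forall>t\<in>linf_pos. (\<forall>k. k \<notin> J \<longrightarrow> t k = 0) \<longrightarrow>
               supnorm (\<lambda>k. t k - s k) < \<delta> \<longrightarrow>
               \<bar>real_of_ereal (mu i t) - real_of_ereal (mu i s)\<bar> < \<epsilon>)))
   \<comment> \<open>(M4)\<close>
   \<and> (\<forall>A \<subseteq> linf_pos. (\<exists>R. \<forall>s\<in>A. supnorm s \<le> R) \<longrightarrow>
        (\<forall>\<epsilon>>0. \<exists>\<delta>>0. \<forall>s0\<in>A. \<forall>s\<in>linf_pos. supnorm (\<lambda>k. s k - s0 k) \<le> \<delta> \<longrightarrow>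
           (\<forall>i. \<bar>real_of_ereal (mu i (restr s (Ii i))) - real_of_ereal (mu i (restr s0 (Ii i)))\<bar> \<le> \<epsilon>)))"

text \<open>The gain operator itself (values finite by (M3)).\<close>
definition Gam ::
  "('i \<Rightarrow> 'i set) \<Rightarrow> ('i \<Rightarrow> 'i \<Rightarrow> real \<Rightarrow> real) \<Rightarrow> ('i \<Rightarrow> ('i \<Rightarrow> real) \<Rightarrow> ereal)
    \<Rightarrow> ('i \<Rightarrow> real) \<Rightarrow> ('i \<Rightarrow> real)" where
  "Gam Ii gam mu s = (\<lambda>i. real_of_ereal (mu i (\<lambda>j. if j \<in> Ii i then gam i j (s j) else 0)))"

definition Gam_rho ::
  "('i \<Rightarrow> 'i set) \<Rightarrow> ('i \<Rightarrow> 'i \<Rightarrow> real \<Rightarrow> real) \<Rightarrow> ('i \<Rightarrow> ('i \<Rightarrow> real) \<Rightarrow> ereal)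
    \<Rightarrow> (real \<Rightarrow> real) \<Rightarrow> ('i \<Rightarrow> real) \<Rightarrow> ('i \<Rightarrow> real)" where
  "Gam_rho Ii gam mu \<rho> s = (\<lambda>i. Gam Ii gam mu s i + \<rho> (Gam Ii gam mu s i))"

definition Gam_hat ::
  "('i \<Rightarrow> 'i set) \<Rightarrow> ('i \<Rightarrow> 'i \<Rightarrow> real \<Rightarrow> real) \<Rightarrow> ('i \<Rightarrow> ('i \<Rightarrow> real) \<Rightarrow> ereal)
    \<Rightarrow> (real \<Rightarrow> real) \<Rightarrow> ('i \<Rightarrow> real) \<Rightarrow> ('i \<Rightarrow> real)" where
  "Gam_hat Ii gam mu \<rho> s = oplus s (Gam_rho Ii gam mu \<rho> s)"

definition oplus_MBI :: "(('i \<Rightarrow> real) \<Rightarrow> ('i \<Rightarrow> real)) \<Rightarrow> bool" where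
  "oplus_MBI T \<longleftrightarrow> (\<exists>\<phi>. Kinf \<phi> \<and> (\<forall>s\<in>linf_pos. \<forall>b\<in>linf_pos.
      (\<forall>i. s i \<le> oplus b (T s) i) \<longrightarrow> supnorm s \<le> \<phi> (supnorm b)))"

definition sigma_star ::
  "('i \<Rightarrow> 'i set) \<Rightarrow> ('i \<Rightarrow> 'i \<Rightarrow> real \<Rightarrow> real) \<Rightarrow> ('i \<Rightarrow> ('i \<Rightarrow> real) \<Rightarrow> ereal)
    \<Rightarrow> (real \<Rightarrow> real) \<Rightarrow> real \<Rightarrow> ('i \<Rightarrow> real)" where
  "sigma_star Ii gam mu \<rho> r = (\<lambda>i. SUP n. ((Gam_hat Ii gam mu \<rho>) ^^ n) (\<lambda>_. r) i)"

definition sigma_star_exists ::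
  "('i \<Rightarrow> 'i set) \<Rightarrow> ('i \<Rightarrow> 'i \<Rightarrow> real \<Rightarrow> real) \<Rightarrow> ('i \<Rightarrow> ('i \<Rightarrow> real) \<Rightarrow> ereal)
    \<Rightarrow> (real \<Rightarrow> real) \<Rightarrow> real \<Rightarrow> bool" where
  "sigma_star_exists Ii gam mu \<rho> r \<longleftrightarrow>
     (\<forall>i. bdd_above (range (\<lambda>n. ((Gam_hat Ii gam mu \<rho>) ^^ n) (\<lambda>_. r) i)))"

definition glob_attr_fixpoint :: "(('i \<Rightarrow> real) \<Rightarrow> ('i \<Rightarrow> real)) \<Rightarrow> ('i \<Rightarrow> real) \<Rightarrow> bool" where
  "glob_attr_fixpoint T \<sigma> \<longleftrightarrow> \<sigma> \<in> linf_pos \<and> T \<sigma> = \<sigma> \<and>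
     (\<forall>s\<in>linf_pos. (\<lambda>n. supnorm (\<lambda>i. (T ^^ n) s i - \<sigma> i)) \<longlonglongrightarrow> 0)"

definition path_strict_decay ::
  "('i \<Rightarrow> 'i set) \<Rightarrow> ('i \<Rightarrow> 'i \<Rightarrow> real \<Rightarrow> real) \<Rightarrow> ('i \<Rightarrow> ('i \<Rightarrow> real) \<Rightarrow> ereal)
    \<Rightarrow> (real \<Rightarrow> 'i \<Rightarrow> real) \<Rightarrow> bool" where
  "path_strict_decay Ii gam mu \<sigma> \<longleftrightarrow>
     (\<forall>r\<ge>0. \<sigma> r \<in> linf_pos)
   \<and> (\<exists>\<rho>. Kinf \<rho> \<and> (\<forall>r\<ge>0. \<forall>i. Gam_rho Ii gam mu \<rho> (\<sigma> r) i \<le> \<sigma> r i))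
   \<and> (\<exists>\<phi>min \<phi>max. Kinf \<phi>min \<and> Kinf \<phi>max \<and>
        (\<forall>r\<ge>0. \<forall>i. \<phi>min r \<le> \<sigma> r i \<and> \<sigma> r i \<le> \<phi>max r))
   \<and> (\<forall>i. Kinf (\<lambda>r. \<sigma> r i))
   \<and> (\<forall>K. compact K \<and> K \<subseteq> {0<..} \<longrightarrow>
        (\<exists>l L. 0 < l \<and> l \<le> L \<and> (\<forall>r1\<in>K. \<forall>r2\<in>K. \<forall>i.
           l * \<bar>r1 - r2\<bar> \<le> \<bar>inv_into {0..} (\<lambda>r. \<sigma> r i) r1 - inv_into {0..} (\<lambda>r. \<sigma> r i) r2\<bar>
         \<and> \<bar>inv_into {0..} (\<lambda>r. \<sigma> r i) r1 - inv_into {0..} (\<lambda>r. \<sigma> r i) r2\<bar> \<le> L * \<bar>r1 - r2\<bar>)))"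

end

theory Submission
  imports Defs
begin


lemma supnorm_le: "(\<And>i. \<bar>x i\<bar> \<le> B) \<Longrightarrow> supnorm x \<le> B"
  unfolding supnorm_def by (rule cSUP_least) auto

lemma abs_le_supnorm: "(\<And>i. \<bar>x i\<bar> \<le> B) \<Longrightarrow> \<bar>x i\<bar> \<le> supnorm x"
  unfolding supnorm_def by (rule cSUP_upper) (auto intro!: bdd_aboveI)

lemma linf_posI: "(\<And>i. 0 \<le> x i) \<Longrightarrow> (\<And>i. x i \<le> B) \<Longrightarrow> x \<in> linf_pos"
  unfolding linf_pos_def by (auto intro!: bdd_aboveI[where M=B])

lemma linf_posD: "x \<in> linf_pos \<Longrightarrow> 0 \<le> x i"
  unfolding linf_pos_def by auto

lemma linf_pos_bound: "x \<in> linf_pos \<Longrightarrow> x i \<le> supnorm x"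
  unfolding linf_pos_def supnorm_def
  by (metis (mono_tags, lifting) abs_of_nonneg cSUP_upper iso_tuple_UNIV_I mem_Collect_eq)

lemma supnorm_const: "0 \<le> (r::real) \<Longrightarrow> supnorm (\<lambda>_. r) = r"
  unfolding supnorm_def by simp

lemma Kinf_nonneg: "Kinf g \<Longrightarrow> 0 \<le> x \<Longrightarrow> 0 \<le> g x"
  unfolding Kinf_def strict_mono_on_def
  by (metis atLeast_iff less_eq_real_def order_refl)

lemma Kinf_mono: "Kinf g \<Longrightarrow> 0 \<le> x \<Longrightarrow> x \<le> y \<Longrightarrow> g x \<le> g y"
  unfolding Kinf_def strict_mono_on_def
  by (metis atLeast_iff less_eq_real_def order_trans)

lemma Kinf_strict: "Kinf g \<Longrightarrow> 0 \<le> x \<Longrightarrow> x < y \<Longrightarrow> g x < g y"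
  unfolding Kinf_def strict_mono_on_def by auto

lemma Kinf_zero: "Kinf g \<Longrightarrow> g 0 = 0"
  unfolding Kinf_def by auto

lemma Kinf_cont: "Kinf g \<Longrightarrow> continuous_on {0..} g"
  unfolding Kinf_def by auto

lemma Kinf_unbdd: "Kinf g \<Longrightarrow> \<exists>x\<ge>0. M < g x"
  unfolding Kinf_def by auto

lemma Kinf_pos: "Kinf g \<Longrightarrow> 0 < x \<Longrightarrow> 0 < g x"
  using Kinf_strict[of g 0 x] Kinf_zero[of g] by auto


locale PS =
  fixes Ii :: "'i \<Rightarrow> 'i set"
    and gam :: "'i \<Rightarrow> 'i \<Rightarrow> real \<Rightarrow> real"
    and mu :: "'i \<Rightarrow> ('i \<Rightarrow> real) \<Rightarrow> ereal"
    and \<rho> :: "real \<Rightarrow> real"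
    and \<phi> :: "real \<Rightarrow> real"
    and \<xi> :: "real \<Rightarrow> real"
  assumes fin: "\<And>i. finite (Ii i)"
    and gamK: "\<And>i j. j \<in> Ii i \<Longrightarrow> Kinf (gam i j)"
    and equi: "\<forall>r\<ge>0. \<forall>\<epsilon>>0. \<exists>\<delta>>0. \<forall>i. \<forall>j\<in>Ii i. \<forall>r'\<ge>0.
          \<bar>r' - r\<bar> < \<delta> \<longrightarrow> \<bar>gam i j r' - gam i j r\<bar> < \<epsilon>"
    and mu_nn: "\<And>i s. s \<in> linf_pos \<Longrightarrow> 0 \<le> mu i s"
    and xiK: "Kinf \<xi>"
    and mu0: "\<And>i. mu i (\<lambda>_. 0) = 0"
    and mu_xi: "\<And>i s. s \<in> linf_pos \<Longrightarrow> ereal (\<xi> (supnorm s)) \<le> mu i s"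
    and mu_mono: "\<And>i s t. s \<in> linf_pos \<Longrightarrow> t \<in> linf_pos \<Longrightarrow> (\<forall>k. s k \<le> t k) \<Longrightarrow> mu i s \<le> mu i t"
    and mu_fin: "\<And>i J s. finite J \<Longrightarrow> s \<in> linf_pos \<Longrightarrow> (\<forall>k. k \<notin> J \<longrightarrow> s k = 0) \<Longrightarrow> mu i s \<noteq> \<infinity>"
    and M4: "\<forall>A \<subseteq> linf_pos. (\<exists>R. \<forall>s\<in>A. supnorm s \<le> R) \<longrightarrow>
        (\<forall>\<epsilon>>0. \<exists>\<delta>>0. \<forall>s0\<in>A. \<forall>s\<in>linf_pos. supnorm (\<lambda>k. s k - s0 k) \<le> \<delta> \<longrightarrow>
           (\<forall>i. \<bar>real_of_ereal (mu i (restr s (Ii i))) - real_of_ereal (mu i (restr s0 (Ii i)))\<bar> \<le> \<epsilon>))"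
    and rhoK: "Kinf \<rho>"
    and phiK: "Kinf \<phi>"
    and MBI: "\<And>s b. s\<in>linf_pos \<Longrightarrow> b\<in>linf_pos \<Longrightarrow>
      (\<forall>i. s i \<le> oplus b (Gam_rho Ii gam mu \<rho> s) i) \<Longrightarrow> supnorm s \<le> \<phi> (supnorm b)"
    and attr: "\<And>r. r \<ge> 0 \<Longrightarrow> glob_attr_fixpoint (\<lambda>s. oplus (\<lambda>_. r) (Gam_rho Ii gam mu \<rho> s))
                 (sigma_star Ii gam mu \<rho> r)"
begin

definition gvec :: "'i \<Rightarrow> ('i \<Rightarrow> real) \<Rightarrow> ('i \<Rightarrow> real)" where
  "gvec i x = (\<lambda>j. if j \<in> Ii i then gam i j (x j) else 0)"

abbreviation G where "G \<equiv> Gam Ii gam mu"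
abbreviation Gr where "Gr \<equiv> Gam_rho Ii gam mu \<rho>"
definition T :: "real \<Rightarrow> ('i \<Rightarrow> real) \<Rightarrow> ('i \<Rightarrow> real)" where
  "T r s = oplus (\<lambda>_. r) (Gr s)"
definition w :: "real \<Rightarrow> 'i \<Rightarrow> real" where
  "w r = sigma_star Ii gam mu \<rho> r"

definition nonneg :: "('i \<Rightarrow> real) \<Rightarrow> bool" where
  "nonneg x \<longleftrightarrow> (\<forall>i. 0 \<le> x i)"

lemma G_def': "G x i = real_of_ereal (mu i (gvec i x))"
  unfolding Gam_def gvec_def by simp

lemma gvec_nn: "nonneg x \<Longrightarrow> 0 \<le> gvec i x j"
  unfolding gvec_def nonneg_def using gamK Kinf_nonneg by auto

lemma gvec_lp: "nonneg x \<Longrightarrow> gvec i x \<in> linf_pos"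
proof -
  assume x: "nonneg x"
  define B where "B = (\<Sum>j\<in>Ii i. gam i j (x j))"
  have nn: "\<And>j. j \<in> Ii i \<Longrightarrow> 0 \<le> gam i j (x j)"
    using gvec_nn[OF x, of i] unfolding gvec_def by (metis)
  have "gvec i x j \<le> B" for j
  proof (cases "j \<in> Ii i")
    case True
    have "gam i j (x j) \<le> B" unfolding B_def
      using member_le_sum[OF True, of "\<lambda>j. gam i j (x j)"] nn fin by blast
    then show ?thesis using True by (simp add: gvec_def)
  next
    case False
    have "0 \<le> B" unfolding B_def using nn by (simp add: sum_nonneg)
    then show ?thesis using False by (simp add: gvec_def)
  qed
  then show ?thesis using gvec_nn[OF x] by (intro linf_posI) auto
qed

lemma mu_gvec_fin: "nonneg x \<Longrightarrow> mu i (gvec i x) = ereal (G x i)"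
proof -
  assume x: "nonneg x"
  have a: "mu i (gvec i x) \<noteq> \<infinity>"
    by (rule mu_fin[OF fin gvec_lp[OF x]]) (auto simp: gvec_def)
  have b: "0 \<le> mu i (gvec i x)" by (rule mu_nn[OF gvec_lp[OF x]])
  from a b have "mu i (gvec i x) = ereal (real_of_ereal (mu i (gvec i x)))"
    by (cases "mu i (gvec i x)") auto
  then show ?thesis by (simp add: G_def')
qed

lemma G_nn: "nonneg x \<Longrightarrow> 0 \<le> G x i"
proof -
  assume x: "nonneg x"
  have "0 \<le> mu i (gvec i x)" by (rule mu_nn[OF gvec_lp[OF x]])
  then show ?thesis using mu_gvec_fin[OF x, of i] by simp
qed

lemma G_mono: "nonneg x \<Longrightarrow> (\<And>j. x j \<le> y j) \<Longrightarrow> G x i \<le> G y i"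
proof -
  assume x: "nonneg x" and xy: "\<And>j. x j \<le> y j"
  have y: "nonneg y" using x xy unfolding nonneg_def by (meson order_trans)
  have "\<forall>k. gvec i x k \<le> gvec i y k"
    using x xy gamK Kinf_mono unfolding gvec_def nonneg_def by auto
  then have "mu i (gvec i x) \<le> mu i (gvec i y)"
    by (intro mu_mono gvec_lp x y)
  then show ?thesis using mu_gvec_fin[OF x] mu_gvec_fin[OF y] by simp
qed

lemma G_zero: "G (\<lambda>_. 0) i = 0"
proof -
  have "gvec i (\<lambda>_. 0) = (\<lambda>_. 0)" unfolding gvec_def using gamK Kinf_zero by auto
  then show ?thesis by (simp add: G_def' mu0)
qed

lemma Gr_def': "Gr x i = G x i + \<rho> (G x i)"
  unfolding Gam_rho_def by simp

lemma Gr_nn: "nonneg x \<Longrightarrow> 0 \<le> Gr x i"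
  using G_nn[of x i] Kinf_nonneg[OF rhoK, of "G x i"] by (simp add: Gr_def')

lemma Gr_mono: "nonneg x \<Longrightarrow> (\<And>j. x j \<le> y j) \<Longrightarrow> Gr x i \<le> Gr y i"
  unfolding Gr_def' using G_mono G_nn Kinf_mono[OF rhoK] by (meson add_mono)

lemma G_le_Gr: "nonneg x \<Longrightarrow> G x i \<le> Gr x i"
  unfolding Gr_def' using G_nn Kinf_nonneg[OF rhoK] by simp

lemma Gr_zero: "Gr (\<lambda>_. 0) i = 0"
  by (simp add: Gr_def' G_zero Kinf_zero[OF rhoK])

lemma T_def': "T r s i = max r (Gr s i)"
  unfolding T_def oplus_def by simp

lemma T_mono: "nonneg x \<Longrightarrow> (\<And>j. x j \<le> y j) \<Longrightarrow> r \<le> r' \<Longrightarrow> T r x i \<le> T r' y i"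
  unfolding T_def' using Gr_mono by (meson max.mono)

lemma T_nn: "0 \<le> r \<Longrightarrow> nonneg (T r x)"
  unfolding nonneg_def T_def' by (simp add: le_max_iff_disj)

lemma w_props: assumes "0 \<le> r"
  shows "w r \<in> linf_pos" "T r (w r) = w r"
    "\<And>s. s \<in> linf_pos \<Longrightarrow> (\<lambda>n. supnorm (\<lambda>i. (T r ^^ n) s i - w r i)) \<longlonglongrightarrow> 0"
  using attr[OF assms] unfolding glob_attr_fixpoint_def w_def T_def by auto

lemma w_fix: "0 \<le> r \<Longrightarrow> w r i = max r (Gr (w r) i)"
  using w_props(2) T_def' by metis

lemma w_ge: "0 \<le> r \<Longrightarrow> r \<le> w r i"
  using w_fix by (metis max.cobounded1)

lemma w_nn: "0 \<le> r \<Longrightarrow> nonneg (w r)"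
  using w_ge unfolding nonneg_def by (meson order_trans)

lemma Gr_w: "0 \<le> r \<Longrightarrow> Gr (w r) i \<le> w r i"
  using w_fix by (metis max.cobounded2)

lemma w_le_phi: "0 \<le> r \<Longrightarrow> w r i \<le> \<phi> r"
proof -
  assume r: "0 \<le> r"
  have "supnorm (w r) \<le> \<phi> (supnorm (\<lambda>_::'i. r))"
  proof -
    have "(\<lambda>_::'i. r) \<in> linf_pos" by (rule linf_posI[where B=r]) (auto simp: r)
    moreover have "\<forall>i. w r i \<le> oplus (\<lambda>_. r) (Gr (w r)) i"
      using w_fix[OF r] by (simp add: oplus_def)
    ultimately show ?thesis using MBI[OF w_props(1)[OF r], of "\<lambda>_. r"] by blast
  qed
  then show ?thesis using linf_pos_bound[OF w_props(1)[OF r]] supnorm_const[OF r] by (metis order_trans)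
qed

end


context PS begin

lemma gam_ueq:
  assumes B: "0 \<le> B" and e: "\<epsilon> > 0"
  shows "\<exists>\<delta>>0. \<forall>i. \<forall>j\<in>Ii i. \<forall>x y. 0 \<le> x \<longrightarrow> x \<le> B \<longrightarrow> 0 \<le> y \<longrightarrow> y \<le> B \<longrightarrow>
            \<bar>x - y\<bar> < \<delta> \<longrightarrow> \<bar>gam i j x - gam i j y\<bar> < \<epsilon>"
proof -
  have "\<forall>r\<in>{0..B}. \<exists>d>0. \<forall>i. \<forall>j\<in>Ii i. \<forall>r'\<ge>0. \<bar>r' - r\<bar> < d \<longrightarrow> \<bar>gam i j r' - gam i j r\<bar> < \<epsilon>/2"
  proof
    fix r assume "r \<in> {0..B}"
    then have "r \<ge> 0" by simp
    moreover have "\<epsilon>/2 > 0" using e by simp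
    ultimately show "\<exists>d>0. \<forall>i. \<forall>j\<in>Ii i. \<forall>r'\<ge>0. \<bar>r' - r\<bar> < d \<longrightarrow> \<bar>gam i j r' - gam i j r\<bar> < \<epsilon>/2"
      using equi by blast
  qed
  then obtain d where d: "\<And>r. r \<in> {0..B} \<Longrightarrow> d r > 0 \<and> (\<forall>i. \<forall>j\<in>Ii i. \<forall>r'\<ge>0. \<bar>r' - r\<bar> < d r \<longrightarrow> \<bar>gam i j r' - gam i j r\<bar> < \<epsilon>/2)"
    by metis
  have cov: "{0..B} \<subseteq> \<Union>((\<lambda>r. ball r (d r)) ` {0..B})"
    using d by force
  obtain e' where e': "0 < e'" "\<And>x. x \<in> {0..B} \<Longrightarrow> \<exists>G \<in> (\<lambda>r. ball r (d r)) ` {0..B}. ball x e' \<subseteq> G"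
    using Heine_Borel_lemma[OF compact_Icc cov] by blast
  show ?thesis
  proof (intro exI[of _ e'] conjI allI ballI impI)
    show "0 < e'" by (rule e')
    fix i j x y assume j: "j \<in> Ii i" and x: "0 \<le> x" "x \<le> B" and y: "0 \<le> y" "y \<le> B" and xy: "\<bar>x - y\<bar> < e'"
    obtain r where r: "r \<in> {0..B}" and sub: "ball x e' \<subseteq> ball r (d r)"
      using e'(2)[of x] x by auto
    have "x \<in> ball x e'" using e'(1) by simp
    then have "x \<in> ball r (d r)" using sub by blast
    moreover have "y \<in> ball r (d r)" using sub xy by (auto simp: dist_real_def abs_minus_commute)
    ultimately have "\<bar>x - r\<bar> < d r" "\<bar>y - r\<bar> < d r"
      by (auto simp: dist_real_def abs_minus_commute)
    then have "\<bar>gam i j x - gam i j r\<bar> < \<epsilon>/2" "\<bar>gam i j y - gam i j r\<bar> < \<epsilon>/2"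
      using d[OF r] j x y by auto
    then show "\<bar>gam i j x - gam i j y\<bar> < \<epsilon>" by linarith
  qed
qed

lemma G_le_phi: "0 \<le> B \<Longrightarrow> nonneg x \<Longrightarrow> (\<And>j. x j \<le> B) \<Longrightarrow> G x i \<le> \<phi> B"
proof -
  assume B: "0 \<le> B" and x: "nonneg x" and xB: "\<And>j. x j \<le> B"
  have "G x i \<le> G (w B) i" by (rule G_mono[OF x]) (metis xB w_ge[OF B] order_trans)
  also have "\<dots> \<le> Gr (w B) i" by (rule G_le_Gr[OF w_nn[OF B]])
  also have "\<dots> \<le> w B i" by (rule Gr_w[OF B])
  also have "\<dots> \<le> \<phi> B" by (rule w_le_phi[OF B])
  finally show ?thesis .
qed

lemma gam_bound:
  assumes B: "0 \<le> B"
  shows "\<exists>Tb\<ge>0. \<forall>i. \<forall>j\<in>Ii i. \<forall>x. 0 \<le> x \<longrightarrow> x \<le> B \<longrightarrow> gam i j x \<le> Tb"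
proof -
  obtain Tb where Tb: "Tb \<ge> 0" "\<phi> B < \<xi> Tb" using Kinf_unbdd[OF xiK, of "\<phi> B"] by auto
  show ?thesis
  proof (intro exI[of _ Tb] conjI allI ballI impI)
    show "0 \<le> Tb" by fact
    fix i j x assume j: "j \<in> Ii i" and x: "0 \<le> x" "x \<le> B"
    define y where "y = (\<lambda>_::'i. B)"
    have y: "nonneg y" using B by (simp add: y_def nonneg_def)
    have "gam i j x \<le> gam i j B" using Kinf_mono[OF gamK[OF j]] x by auto
    also have "\<dots> = gvec i y j" using j by (simp add: gvec_def y_def)
    also have "\<dots> \<le> supnorm (gvec i y)" by (rule linf_pos_bound[OF gvec_lp[OF y]])
    finally have g1: "gam i j x \<le> supnorm (gvec i y)" .
    have "ereal (\<xi> (supnorm (gvec i y))) \<le> mu i (gvec i y)" by (rule mu_xi[OF gvec_lp[OF y]])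
    also have "\<dots> = ereal (G y i)" by (rule mu_gvec_fin[OF y])
    finally have "\<xi> (supnorm (gvec i y)) \<le> G y i" by simp
    also have "G y i \<le> \<phi> B" by (rule G_le_phi[OF B y]) (simp add: y_def)
    finally have "\<xi> (supnorm (gvec i y)) < \<xi> Tb" using Tb by linarith
    moreover have "0 \<le> supnorm (gvec i y)"
      using linf_pos_bound[OF gvec_lp[OF y, of i], of j] gvec_nn[OF y, of i j] by linarith
    ultimately have "supnorm (gvec i y) < Tb"
      using Kinf_mono[OF xiK, of Tb "supnorm (gvec i y)"] Tb(1) by (meson not_less)
    then show "gam i j x \<le> Tb" using g1 by linarith
  qed
qed

lemma G_ucont:
  assumes B: "0 \<le> B" and e: "\<epsilon> > 0"
  shows "\<exists>\<delta>>0. \<forall>x y i. nonneg x \<longrightarrow> nonneg y \<longrightarrow> (\<forall>j. x j \<le> B) \<longrightarrow> (\<forall>j. y j \<le> B) \<longrightarrow>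
     (\<forall>j. \<bar>x j - y j\<bar> < \<delta>) \<longrightarrow> \<bar>G x i - G y i\<bar> \<le> \<epsilon>"
proof -
  obtain Tb where Tb: "Tb \<ge> 0" "\<And>i j x. j \<in> Ii i \<Longrightarrow> 0 \<le> x \<Longrightarrow> x \<le> B \<Longrightarrow> gam i j x \<le> Tb"
    using gam_bound[OF B] by blast
  define A where "A = {gvec i y | i y. nonneg y \<and> (\<forall>j. y j \<le> B)}"
  have A1: "A \<subseteq> linf_pos" unfolding A_def using gvec_lp by blast
  have A2: "\<exists>R. \<forall>s\<in>A. supnorm s \<le> R"
  proof (intro exI[of _ Tb] ballI)
    fix s assume "s \<in> A"
    then obtain i y where s: "s = gvec i y" and y: "nonneg y" "\<forall>j. y j \<le> B" unfolding A_def by blast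
    show "supnorm s \<le> Tb"
    proof (rule supnorm_le)
      fix j show "\<bar>s j\<bar> \<le> Tb"
        using Tb gvec_nn[OF y(1), of i j] y unfolding s by (auto simp: gvec_def nonneg_def)
    qed
  qed
  obtain dM where dM: "dM > 0" "\<And>s0 s i. s0 \<in> A \<Longrightarrow> s \<in> linf_pos \<Longrightarrow> supnorm (\<lambda>k. s k - s0 k) \<le> dM \<Longrightarrow>
      \<bar>real_of_ereal (mu i (restr s (Ii i))) - real_of_ereal (mu i (restr s0 (Ii i)))\<bar> \<le> \<epsilon>"
    using M4 A1 A2 e by metis
  obtain d where d: "d > 0" "\<And>i j x y. j \<in> Ii i \<Longrightarrow> 0 \<le> x \<Longrightarrow> x \<le> B \<Longrightarrow> 0 \<le> y \<Longrightarrow> y \<le> B \<Longrightarrow>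
            \<bar>x - y\<bar> < d \<Longrightarrow> \<bar>gam i j x - gam i j y\<bar> < dM"
    using gam_ueq[OF B dM(1)] by blast
  show ?thesis
  proof (intro exI[of _ d] conjI allI impI)
    show "d > 0" by fact
    fix x y i assume x: "nonneg x" and y: "nonneg y" and xB: "\<forall>j. x j \<le> B" and yB: "\<forall>j. y j \<le> B"
      and xy: "\<forall>j. \<bar>x j - y j\<bar> < d"
    have s0: "gvec i y \<in> A" unfolding A_def using y yB by blast
    have sn: "supnorm (\<lambda>k. gvec i x k - gvec i y k) \<le> dM"
    proof (rule supnorm_le)
      fix k show "\<bar>gvec i x k - gvec i y k\<bar> \<le> dM"
        using d(2)[of k i "x k" "y k"] x y xB yB xy dM(1) unfolding gvec_def nonneg_def
        by (cases "k \<in> Ii i") auto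
    qed
    have r: "\<And>z. restr (gvec i z) (Ii i) = gvec i z" unfolding restr_def gvec_def by auto
    show "\<bar>G x i - G y i\<bar> \<le> \<epsilon>"
      using dM(2)[OF s0 gvec_lp[OF x] sn, of i] unfolding r G_def' .
  qed
qed

lemma Gr_ucont:
  assumes B: "0 \<le> B" and e: "\<epsilon> > 0"
  shows "\<exists>\<delta>>0. \<forall>x y i. nonneg x \<longrightarrow> nonneg y \<longrightarrow> (\<forall>j. x j \<le> B) \<longrightarrow> (\<forall>j. y j \<le> B) \<longrightarrow>
     (\<forall>j. \<bar>x j - y j\<bar> < \<delta>) \<longrightarrow> \<bar>Gr x i - Gr y i\<bar> \<le> \<epsilon>"
proof -
  have "uniformly_continuous_on {0..\<phi> B} \<rho>"
    by (rule compact_uniformly_continuous[OF continuous_on_subset[OF Kinf_cont[OF rhoK]]]) auto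
  then obtain dr where dr: "dr > 0" "\<And>x x'. x \<in> {0..\<phi> B} \<Longrightarrow> x' \<in> {0..\<phi> B} \<Longrightarrow> dist x' x < dr \<Longrightarrow> dist (\<rho> x') (\<rho> x) < \<epsilon>/2"
    unfolding uniformly_continuous_on_def using e by (meson half_gt_zero)
  obtain d where d: "d > 0" "\<And>x y i. nonneg x \<Longrightarrow> nonneg y \<Longrightarrow> (\<forall>j. x j \<le> B) \<Longrightarrow> (\<forall>j. y j \<le> B) \<Longrightarrow>
     (\<forall>j. \<bar>x j - y j\<bar> < d) \<Longrightarrow> \<bar>G x i - G y i\<bar> \<le> min (\<epsilon>/2) (dr/2)"
    using G_ucont[OF B, of "min (\<epsilon>/2) (dr/2)"] e dr(1) by auto
  show ?thesis
  proof (intro exI[of _ d] conjI allI impI)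
    show "d > 0" by fact
    fix x y i assume x: "nonneg x" and y: "nonneg y" and xB: "\<forall>j. x j \<le> B" and yB: "\<forall>j. y j \<le> B"
      and xy: "\<forall>j. \<bar>x j - y j\<bar> < d"
    have g: "\<bar>G x i - G y i\<bar> \<le> min (\<epsilon>/2) (dr/2)" using d(2) x y xB yB xy by blast
    have gx: "G x i \<in> {0..\<phi> B}" using G_nn[OF x] G_le_phi[OF B x] xB by auto
    have gy: "G y i \<in> {0..\<phi> B}" using G_nn[OF y] G_le_phi[OF B y] yB by auto
    have "dist (G x i) (G y i) < dr" using g dr(1) by (simp add: dist_real_def)
    then have "dist (\<rho> (G x i)) (\<rho> (G y i)) < \<epsilon>/2" using dr(2)[OF gy gx] by blast
    then show "\<bar>Gr x i - Gr y i\<bar> \<le> \<epsilon>" using g unfolding Gr_def' dist_real_def by linarith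
  qed
qed

lemma T_diff: "\<bar>T r x i - T r' y i\<bar> \<le> \<bar>r - r'\<bar> + \<bar>Gr x i - Gr y i\<bar>"
  unfolding T_def' by (simp add: max_def abs_if split: if_splits)

end


context PS begin

lemma iter_nn: "nonneg x \<Longrightarrow> 0 \<le> r \<Longrightarrow> nonneg ((T r ^^ n) x)"
  by (induction n) (auto intro: T_nn)

lemma iter_mono: "nonneg x \<Longrightarrow> (\<And>j. x j \<le> y j) \<Longrightarrow> 0 \<le> r \<Longrightarrow> (T r ^^ n) x j \<le> (T r ^^ n) y j"
proof (induction n arbitrary: j)
  case 0 then show ?case by simp
next
  case (Suc n)
  have "T r ((T r ^^ n) x) j \<le> T r ((T r ^^ n) y) j"
    by (rule T_mono[OF iter_nn[OF Suc.prems(1) Suc.prems(3)]]) (use Suc in auto)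
  then show ?case by simp
qed

lemma iter_bound:
  assumes "0 \<le> r" "r \<le> R" "nonneg s" "\<And>j. s j \<le> w R j"
  shows "(T r ^^ n) s j \<le> w R j"
proof (induction n arbitrary: j)
  case 0 then show ?case using assms by simp
next
  case (Suc n)
  have R: "0 \<le> R" using assms by linarith
  have "T r ((T r ^^ n) s) j \<le> T R (w R) j"
    by (rule T_mono[OF iter_nn[OF assms(3,1)]]) (use Suc assms in auto)
  also have "\<dots> = w R j" using w_props(2)[OF R] by simp
  finally show ?case by simp
qed

lemma conv_comp:
  assumes "(\<lambda>n. supnorm (\<lambda>i. X n i - y i)) \<longlonglongrightarrow> 0" "\<And>n i. \<bar>X n i - y i\<bar> \<le> C" "\<epsilon> > 0"
  shows "\<exists>N. \<forall>i. \<bar>X N i - y i\<bar> < \<epsilon>"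
proof -
  obtain N where "\<forall>n\<ge>N. norm (supnorm (\<lambda>i. X n i - y i) - 0) < \<epsilon>"
    using LIMSEQ_D[OF assms(1) assms(3)] by blast
  then have "supnorm (\<lambda>i. X N i - y i) < \<epsilon>" by auto
  moreover have "\<And>i. \<bar>X N i - y i\<bar> \<le> supnorm (\<lambda>i. X N i - y i)"
    by (rule abs_le_supnorm) (rule assms(2))
  ultimately show ?thesis by (meson le_less_trans)
qed

lemma zero_nn: "nonneg (\<lambda>_. 0)" by (simp add: nonneg_def)

lemma phi_mono: "0 \<le> a \<Longrightarrow> a \<le> b \<Longrightarrow> \<phi> a \<le> \<phi> b" by (rule Kinf_mono[OF phiK])

lemma w_mono:
  assumes r: "0 \<le> r" and rr: "r \<le> r'"
  shows "w r i \<le> w r' i"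
proof -
  have r': "0 \<le> r'" using r rr by linarith
  define X where "X n = (T r ^^ n) (w r')" for n
  have Xb: "0 \<le> X n j \<and> X n j \<le> w r' j" for n j
    using iter_nn[OF w_nn[OF r'] r, of n] iter_bound[OF r rr w_nn[OF r'], of n j]
    unfolding X_def nonneg_def by auto
  have wb: "0 \<le> w r j \<and> w r j \<le> \<phi> r'" for j
    using w_nn[OF r] w_le_phi[OF r] phi_mono[OF r rr] unfolding nonneg_def by (meson order_trans)
  have w'b: "w r' j \<le> \<phi> r'" for j using w_le_phi[OF r'] .
  have C: "\<bar>X n j - w r j\<bar> \<le> 2 * \<phi> r'" for n j using Xb[of n j] wb[of j] w'b[of j] by auto
  show ?thesis
  proof (rule field_le_epsilon)
    fix e :: real assume e: "0 < e"
    obtain N where "\<forall>i. \<bar>X N i - w r i\<bar> < e"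
      using conv_comp[OF w_props(3)[OF r w_props(1)[OF r']] _ e] C unfolding X_def by blast
    then have "\<bar>X N i - w r i\<bar> < e" by blast
    then show "w r i \<le> w r' i + e" using Xb[of N i] by linarith
  qed
qed

lemma iter_close:
  assumes r: "0 \<le> r"
  shows "\<forall>\<epsilon>>0. \<exists>\<eta>>0. \<forall>r'. 0 \<le> r' \<longrightarrow> r' \<le> r + 1 \<longrightarrow> \<bar>r' - r\<bar> < \<eta> \<longrightarrow>
           (\<forall>i. \<bar>(T r ^^ K) (w r') i - w r' i\<bar> \<le> \<epsilon>)"
proof (induction K)
  case 0 then show ?case by (auto intro: exI[of _ 1])
next
  case (Suc K)
  show ?case
  proof (intro allI impI)
    fix \<epsilon> :: real assume e: "\<epsilon> > 0"
    define B where "B = \<phi> (r + 1)"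
    have B: "0 \<le> B" unfolding B_def using Kinf_nonneg[OF phiK] r by simp
    obtain d where d: "d > 0" "\<And>x y i. nonneg x \<Longrightarrow> nonneg y \<Longrightarrow> (\<forall>j. x j \<le> B) \<Longrightarrow> (\<forall>j. y j \<le> B) \<Longrightarrow>
       (\<forall>j. \<bar>x j - y j\<bar> < d) \<Longrightarrow> \<bar>Gr x i - Gr y i\<bar> \<le> \<epsilon>/2"
      using Gr_ucont[OF B, of "\<epsilon>/2"] e by auto
    obtain \<eta>1 where \<eta>1: "\<eta>1 > 0" "\<And>r'. 0 \<le> r' \<Longrightarrow> r' \<le> r + 1 \<Longrightarrow> \<bar>r' - r\<bar> < \<eta>1 \<Longrightarrow>
           (\<forall>i. \<bar>(T r ^^ K) (w r') i - w r' i\<bar> \<le> d/2)"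
      using Suc.IH d(1) by (meson half_gt_zero)
    show "\<exists>\<eta>>0. \<forall>r'. 0 \<le> r' \<longrightarrow> r' \<le> r + 1 \<longrightarrow> \<bar>r' - r\<bar> < \<eta> \<longrightarrow>
           (\<forall>i. \<bar>(T r ^^ Suc K) (w r') i - w r' i\<bar> \<le> \<epsilon>)"
    proof (intro exI[of _ "min \<eta>1 (\<epsilon>/2)"] conjI allI impI)
      show "0 < min \<eta>1 (\<epsilon>/2)" using \<eta>1(1) e by simp
      fix r' i assume r': "0 \<le> r'" "r' \<le> r + 1" "\<bar>r' - r\<bar> < min \<eta>1 (\<epsilon>/2)"
      define X where "X = (T r ^^ K) (w r')"
      have Xn: "nonneg X" unfolding X_def by (rule iter_nn[OF w_nn[OF r'(1)] r])
      have Xb: "X j \<le> B" for j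
      proof -
        have "X j \<le> w (max r r') j" unfolding X_def
          by (rule iter_bound[OF r _ w_nn[OF r'(1)]]) (auto intro: w_mono[OF r'(1)])
        also have "\<dots> \<le> \<phi> (max r r')" by (rule w_le_phi) (use r in auto)
        also have "\<dots> \<le> B" unfolding B_def by (rule phi_mono) (use r r' in auto)
        finally show ?thesis .
      qed
      have wb: "w r' j \<le> B" for j
        using w_le_phi[OF r'(1)] phi_mono[OF r'(1) r'(2)] unfolding B_def by (meson order_trans)
      have "\<forall>j. \<bar>X j - w r' j\<bar> < d"
      proof
        fix j
        have "\<bar>r' - r\<bar> < \<eta>1" using r'(3) by linarith
        then have "\<bar>X j - w r' j\<bar> \<le> d/2" using \<eta>1(2)[OF r'(1,2)] unfolding X_def by blast
        then show "\<bar>X j - w r' j\<bar> < d" using d(1) by linarith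
      qed
      then have g: "\<bar>Gr X i - Gr (w r') i\<bar> \<le> \<epsilon>/2"
        using d(2)[OF Xn w_nn[OF r'(1)]] Xb wb by blast
      have "(T r ^^ Suc K) (w r') i = T r X i" unfolding X_def by simp
      moreover have "w r' i = T r' (w r') i" using w_props(2)[OF r'(1)] by simp
      ultimately have "\<bar>(T r ^^ Suc K) (w r') i - w r' i\<bar> \<le> \<bar>r - r'\<bar> + \<bar>Gr X i - Gr (w r') i\<bar>"
        using T_diff by simp
      then show "\<bar>(T r ^^ Suc K) (w r') i - w r' i\<bar> \<le> \<epsilon>" using g r'(3) by (simp add: abs_minus_commute)
    qed
  qed
qed

lemma w_cont:
  assumes r: "0 \<le> r" and e: "\<epsilon> > 0"
  shows "\<exists>\<delta>>0. \<forall>r'. 0 \<le> r' \<longrightarrow> \<bar>r' - r\<bar> < \<delta> \<longrightarrow> (\<forall>i. \<bar>w r' i - w r i\<bar> \<le> \<epsilon>)"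
proof -
  have r1: "0 \<le> r + 1" using r by simp
  have wrb: "0 \<le> w r j \<and> w r j \<le> \<phi> (r+1)" for j
    using w_nn[OF r] w_le_phi[OF r] phi_mono[OF r, of "r+1"] unfolding nonneg_def by (meson less_eq_real_def less_add_one order_trans)
  define X where "X n = (T r ^^ n) (w (r+1))" for n
  have Xb: "0 \<le> X n j \<and> X n j \<le> \<phi> (r+1)" for n j
    using iter_nn[OF w_nn[OF r1] r, of n] iter_bound[OF r _ w_nn[OF r1], of "r+1" n j] w_le_phi[OF r1, of j]
    unfolding X_def nonneg_def by force
  have CX: "\<bar>(T r ^^ n) (w (r+1)) i - w r i\<bar> \<le> 2 * \<phi> (r+1)" for n i
    using Xb[of n i] wrb[of i] unfolding X_def by (auto simp: abs_le_iff)
  obtain N where N: "\<forall>i. \<bar>X N i - w r i\<bar> < \<epsilon>/2"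
    using conv_comp[OF w_props(3)[OF r w_props(1)[OF r1]] CX, of "\<epsilon>/2"] e
    unfolding X_def by auto
  define Y where "Y n = (T r ^^ n) (\<lambda>_. 0)" for n
  have z: "(\<lambda>_::'i. 0::real) \<in> linf_pos" by (rule linf_posI[where B=0]) auto
  have Yb: "0 \<le> Y n j \<and> Y n j \<le> \<phi> (r+1)" for n j
  proof -
    have "Y n j \<le> w r j" unfolding Y_def
      by (rule iter_bound[OF r order_refl zero_nn]) (use w_nn[OF r] in \<open>auto simp: nonneg_def\<close>)
    then show ?thesis using wrb[of j] iter_nn[OF zero_nn r, of n] unfolding Y_def nonneg_def by force
  qed
  have CY: "\<bar>(T r ^^ n) (\<lambda>_. 0) i - w r i\<bar> \<le> 2 * \<phi> (r+1)" for n i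
    using Yb[of n i] wrb[of i] unfolding Y_def by (auto simp: abs_le_iff)
  obtain N' where N': "\<forall>i. \<bar>Y N' i - w r i\<bar> < \<epsilon>/2"
    using conv_comp[OF w_props(3)[OF r z] CY, of "\<epsilon>/2"] e
    unfolding Y_def by auto
  obtain \<eta>1 where \<eta>1: "\<eta>1 > 0" "\<And>r'. 0 \<le> r' \<Longrightarrow> r' \<le> r + 1 \<Longrightarrow> \<bar>r' - r\<bar> < \<eta>1 \<Longrightarrow>
           (\<forall>i. \<bar>(T r ^^ N) (w r') i - w r' i\<bar> \<le> \<epsilon>/2)"
    using iter_close[OF r, of N] e by (meson half_gt_zero)
  obtain \<eta>2 where \<eta>2: "\<eta>2 > 0" "\<And>r'. 0 \<le> r' \<Longrightarrow> r' \<le> r + 1 \<Longrightarrow> \<bar>r' - r\<bar> < \<eta>2 \<Longrightarrow>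
           (\<forall>i. \<bar>(T r ^^ N') (w r') i - w r' i\<bar> \<le> \<epsilon>/2)"
    using iter_close[OF r, of N'] e by (meson half_gt_zero)
  show ?thesis
  proof (intro exI[of _ "min (min \<eta>1 \<eta>2) 1"] conjI allI impI)
    show "0 < min (min \<eta>1 \<eta>2) 1" using \<eta>1 \<eta>2 by simp
    fix r' i assume r': "0 \<le> r'" "\<bar>r' - r\<bar> < min (min \<eta>1 \<eta>2) 1"
    have r'1: "r' \<le> r + 1" using r' by linarith
    show "\<bar>w r' i - w r i\<bar> \<le> \<epsilon>"
    proof (cases "r \<le> r'")
      case True
      have a: "w r i \<le> w r' i" by (rule w_mono[OF r True])
      have "\<bar>r' - r\<bar> < \<eta>1" using r'(2) by linarith
      then have "\<bar>(T r ^^ N) (w r') i - w r' i\<bar> \<le> \<epsilon>/2" using \<eta>1(2)[OF r'(1) r'1] by blast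
      then have "w r' i \<le> (T r ^^ N) (w r') i + \<epsilon>/2" by linarith
      moreover have "(T r ^^ N) (w r') i \<le> X N i" unfolding X_def
        by (rule iter_mono[OF w_nn[OF r'(1)] _ r]) (rule w_mono[OF r'(1) r'1])
      moreover have "\<bar>X N i - w r i\<bar> < \<epsilon>/2" using N by blast
      ultimately show ?thesis using a by linarith
    next
      case False
      have a: "w r' i \<le> w r i" by (rule w_mono) (use False r' in auto)
      have "Y N' i \<le> (T r ^^ N') (w r') i" unfolding Y_def
        by (rule iter_mono[OF zero_nn _ r]) (use w_nn[OF r'(1)] in \<open>auto simp: nonneg_def\<close>)
      also have "\<dots> \<le> w r' i + \<epsilon>/2"
      proof -
        have "\<bar>r' - r\<bar> < \<eta>2" using r'(2) by linarith
        then have "\<bar>(T r ^^ N') (w r') i - w r' i\<bar> \<le> \<epsilon>/2" using \<eta>2(2)[OF r'(1) r'1] by blast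
        then show ?thesis by linarith
      qed
      finally have "Y N' i \<le> w r' i + \<epsilon>/2" .
      moreover have "\<bar>Y N' i - w r i\<bar> < \<epsilon>/2" using N' by blast
      ultimately show ?thesis using a by linarith
    qed
  qed
qed

end


context PS begin

definition mg :: "real \<Rightarrow> real" where "mg S = min (S/4) (\<rho> (S/4) / 2)"

lemma mg_pos: "0 < S \<Longrightarrow> 0 < mg S"
  unfolding mg_def using Kinf_pos[OF rhoK, of "S/4"] by simp

lemma mg_mono: "0 \<le> S \<Longrightarrow> S \<le> S' \<Longrightarrow> mg S \<le> mg S'"
  unfolding mg_def using Kinf_mono[OF rhoK, of "S/4" "S'/4"] by (simp add: min_def)

lemma mg_le: "mg S \<le> S/4" unfolding mg_def by simp

definition rho2 :: "real \<Rightarrow> real" where "rho2 t = \<rho> t / 2"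

lemma rho2K: "Kinf rho2"
proof -
  have c: "continuous_on {0..} rho2" unfolding rho2_def
    by (intro continuous_on_divide continuous_on_const Kinf_cont[OF rhoK]) auto
  have s: "strict_mono_on {0..} rho2" unfolding rho2_def strict_mono_on_def
    using Kinf_strict[OF rhoK] by auto
  have u: "\<forall>M. \<exists>x\<ge>0. M < rho2 x"
  proof
    fix M obtain x where "x \<ge> 0" "2*M < \<rho> x" using Kinf_unbdd[OF rhoK, of "2*M"] by auto
    then show "\<exists>x\<ge>0. M < rho2 x" unfolding rho2_def by (intro exI[of _ x]) auto
  qed
  show ?thesis unfolding Kinf_def using c s u Kinf_zero[OF rhoK] by (simp add: rho2_def)
qed

abbreviation Gr2 where "Gr2 \<equiv> Gam_rho Ii gam mu rho2"

lemma Gr2_def': "Gr2 x i = G x i + \<rho> (G x i) / 2"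
  unfolding Gam_rho_def rho2_def by simp

lemma Gr2_mono: "nonneg x \<Longrightarrow> (\<And>j. x j \<le> y j) \<Longrightarrow> Gr2 x i \<le> Gr2 y i"
proof -
  assume x: "nonneg x" and xy: "\<And>j. x j \<le> y j"
  have a: "G x i \<le> G y i" by (rule G_mono[OF x xy])
  have "\<rho> (G x i) \<le> \<rho> (G y i)" by (rule Kinf_mono[OF rhoK G_nn[OF x] a])
  then show ?thesis unfolding Gr2_def' using a by simp
qed

lemma Gr2_nn: "nonneg x \<Longrightarrow> 0 \<le> Gr2 x i"
  unfolding Gr2_def' using G_nn[of x i] Kinf_nonneg[OF rhoK, of "G x i"] by simp

lemma margin:
  assumes S: "0 < S"
  shows "Gr2 (w S) i \<le> w S i - mg S"
proof -
  have S0: "0 \<le> S" using S by simp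
  define g where "g = G (w S) i"
  have g0: "0 \<le> g" unfolding g_def by (rule G_nn[OF w_nn[OF S0]])
  have h1: "g + \<rho> g \<le> w S i" using Gr_w[OF S0, of i] unfolding g_def Gr_def' .
  have h2: "S \<le> w S i" by (rule w_ge[OF S0])
  have rg: "0 \<le> \<rho> g" using Kinf_nonneg[OF rhoK g0] .
  show ?thesis
  proof (cases "mg S \<le> \<rho> g / 2")
    case True then show ?thesis unfolding Gr2_def' g_def[symmetric] using h1 by linarith
  next
    case False
    then have "\<rho> g < \<rho> (S/4)" unfolding mg_def by linarith
    then have "g < S/4"
    proof -
      assume lt: "\<rho> g < \<rho> (S/4)"
      show "g < S/4"
      proof (rule ccontr)
        assume "\<not> g < S/4"
        then have "\<rho> (S/4) \<le> \<rho> g" using Kinf_mono[OF rhoK, of "S/4" g] S by simp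
        then show False using lt by simp
      qed
    qed
    then show ?thesis unfolding Gr2_def' g_def[symmetric] using h2 False mg_le[of S] S by linarith
  qed
qed

lemma w_cont': "0 \<le> r \<Longrightarrow> \<epsilon> > 0 \<Longrightarrow> \<exists>\<delta>>0. \<forall>r' i. 0 \<le> r' \<longrightarrow> \<bar>r' - r\<bar> < \<delta> \<longrightarrow> \<bar>w r' i - w r i\<bar> \<le> \<epsilon>"
proof -
  assume r: "0 \<le> r" and e: "\<epsilon> > 0"
  obtain \<delta> where d: "\<delta> > 0" "\<forall>r'. 0 \<le> r' \<longrightarrow> \<bar>r' - r\<bar> < \<delta> \<longrightarrow> (\<forall>i. \<bar>w r' i - w r i\<bar> \<le> \<epsilon>)"
    using w_cont[OF r e] by (elim exE conjE)
  show ?thesis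
  proof (intro exI[of _ \<delta>] conjI allI impI)
    show "\<delta> > 0" by (rule d(1))
    fix r' i assume "0 \<le> r'" "\<bar>r' - r\<bar> < \<delta>"
    then show "\<bar>w r' i - w r i\<bar> \<le> \<epsilon>" using d(2) by blast
  qed
qed

definition Dn :: "real \<Rightarrow> real set" where
  "Dn S = {d. 0 \<le> d \<and> d \<le> S \<and> (\<forall>i. w (S + d) i \<le> w S i + mg S / 2)}"
definition nxt :: "real \<Rightarrow> real" where "nxt S = S + Sup (Dn S)"

definition En :: "real \<Rightarrow> real set" where
  "En S = {e. 0 \<le> e \<and> e \<le> S/2 \<and> (\<forall>i. w S i \<le> w (S - e) i + mg (S/2) / 2)}"
definition prv :: "real \<Rightarrow> real" where "prv S = S - Sup (En S)"

lemma Dn_basic: assumes S: "0 < S" shows "0 \<in> Dn S" "bdd_above (Dn S)" "Dn S \<noteq> {}" "\<And>d. d \<in> Dn S \<Longrightarrow> d \<le> S"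
proof -
  show z: "0 \<in> Dn S" using S mg_pos[OF S] unfolding Dn_def by auto
  then show "Dn S \<noteq> {}" by blast
  show "\<And>d. d \<in> Dn S \<Longrightarrow> d \<le> S" unfolding Dn_def by auto
  then show "bdd_above (Dn S)" by (meson bdd_aboveI)
qed

lemma En_basic: assumes S: "0 < S" shows "0 \<in> En S" "bdd_above (En S)" "En S \<noteq> {}" "\<And>e. e \<in> En S \<Longrightarrow> e \<le> S/2"
proof -
  have "0 < mg (S/2)" using mg_pos[of "S/2"] S by simp
  then show z: "0 \<in> En S" using S unfolding En_def by auto
  then show "En S \<noteq> {}" by blast
  show "\<And>e. e \<in> En S \<Longrightarrow> e \<le> S/2" unfolding En_def by auto
  then show "bdd_above (En S)" by (meson bdd_aboveI)
qed

lemma Dn_sup: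
  assumes S: "0 < S"
  shows "0 < Sup (Dn S)" "Sup (Dn S) \<le> S" "\<forall>i. w (S + Sup (Dn S)) i \<le> w S i + mg S / 2"
proof -
  note b = Dn_basic[OF S]
  show le: "Sup (Dn S) \<le> S" using b by (meson cSup_least)
  have ge0: "0 \<le> Sup (Dn S)" using b by (meson cSup_upper)
  have S0: "0 \<le> S" and mS: "0 < mg S / 2" using S mg_pos[OF S] by auto
  obtain \<delta> where \<delta>: "\<delta> > 0" "\<forall>r' i. 0 \<le> r' \<longrightarrow> \<bar>r' - S\<bar> < \<delta> \<longrightarrow> \<bar>w r' i - w S i\<bar> \<le> mg S / 2"
    using w_cont'[OF S0 mS] by blast
  have "min (\<delta>/2) S \<in> Dn S"
  proof -
    have h: "\<bar>w (S + min (\<delta>/2) S) i - w S i\<bar> \<le> mg S / 2" for i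
      by (rule \<delta>(2)[rule_format]) (use \<delta>(1) S in auto)
    have "w (S + min (\<delta>/2) S) i \<le> w S i + mg S / 2" for i
      using h[of i] unfolding abs_le_iff by linarith
    then show ?thesis unfolding Dn_def using \<delta>(1) S by auto
  qed
  then have "min (\<delta>/2) S \<le> Sup (Dn S)" by (rule cSup_upper[OF _ b(2)])
  moreover have "0 < min (\<delta>/2) S" using \<delta>(1) S by simp
  ultimately show "0 < Sup (Dn S)" by linarith
  show "\<forall>i. w (S + Sup (Dn S)) i \<le> w S i + mg S / 2"
  proof
    fix i
    show "w (S + Sup (Dn S)) i \<le> w S i + mg S / 2"
    proof (rule field_le_epsilon)
      fix e :: real assume e: "0 < e"
      have p0: "0 \<le> S + Sup (Dn S)" using S ge0 by simp
      obtain \<delta>' where \<delta>': "\<delta>' > 0" "\<forall>r' i. 0 \<le> r' \<longrightarrow> \<bar>r' - (S + Sup (Dn S))\<bar> < \<delta>' \<longrightarrow> \<bar>w r' i - w (S + Sup (Dn S)) i\<bar> \<le> e"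
        using w_cont'[OF p0 e] by blast
      have "Sup (Dn S) - \<delta>' < Sup (Dn S)" using \<delta>'(1) by simp
      then obtain d where d: "d \<in> Dn S" "Sup (Dn S) - \<delta>' < d"
        using less_cSupD[OF b(3)] by blast
      have dle: "d \<le> Sup (Dn S)" using cSup_upper[OF d(1) b(2)] .
      have d0: "0 \<le> d" using d(1) unfolding Dn_def by auto
      have "\<bar>(S + d) - (S + Sup (Dn S))\<bar> < \<delta>'" using d(2) dle by (simp add: abs_if)
      moreover have "0 \<le> S + d" using d0 S by simp
      ultimately have "\<bar>w (S + d) i - w (S + Sup (Dn S)) i\<bar> \<le> e"
        by (rule \<delta>'(2)[rule_format, rotated])
      moreover have "w (S + d) i \<le> w S i + mg S / 2" using d(1) unfolding Dn_def by auto
      ultimately show "w (S + Sup (Dn S)) i \<le> w S i + mg S / 2 + e" by linarith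
    qed
  qed
qed

lemma En_sup:
  assumes S: "0 < S"
  shows "0 < Sup (En S)" "Sup (En S) \<le> S/2" "\<forall>i. w S i \<le> w (S - Sup (En S)) i + mg (S/2) / 2"
proof -
  note b = En_basic[OF S]
  show le: "Sup (En S) \<le> S/2" using b by (meson cSup_least)
  have ge0: "0 \<le> Sup (En S)" using b by (meson cSup_upper)
  have mp: "0 < mg (S/2)" using mg_pos[of "S/2"] S by simp
  have S0: "0 \<le> S" and mS: "0 < mg (S/2) / 2" using S mp by auto
  obtain \<delta> where \<delta>: "\<delta> > 0" "\<forall>r' i. 0 \<le> r' \<longrightarrow> \<bar>r' - S\<bar> < \<delta> \<longrightarrow> \<bar>w r' i - w S i\<bar> \<le> mg (S/2) / 2"
    using w_cont'[OF S0 mS] by blast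
  have "min (\<delta>/2) (S/2) \<in> En S"
  proof -
    have h: "\<bar>w (S - min (\<delta>/2) (S/2)) i - w S i\<bar> \<le> mg (S/2) / 2" for i
      by (rule \<delta>(2)[rule_format]) (use \<delta>(1) S in auto)
    have "w S i \<le> w (S - min (\<delta>/2) (S/2)) i + mg (S/2) / 2" for i
      using h[of i] unfolding abs_le_iff by linarith
    then show ?thesis unfolding En_def using \<delta>(1) S by auto
  qed
  then have "min (\<delta>/2) (S/2) \<le> Sup (En S)" by (rule cSup_upper[OF _ b(2)])
  moreover have "0 < min (\<delta>/2) (S/2)" using \<delta>(1) S by simp
  ultimately show "0 < Sup (En S)" by linarith
  show "\<forall>i. w S i \<le> w (S - Sup (En S)) i + mg (S/2) / 2"
  proof
    fix i
    show "w S i \<le> w (S - Sup (En S)) i + mg (S/2) / 2"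
    proof (rule field_le_epsilon)
      fix e :: real assume e: "0 < e"
      have p0: "0 \<le> S - Sup (En S)" using S le by simp
      obtain \<delta>' where \<delta>': "\<delta>' > 0" "\<forall>r' i. 0 \<le> r' \<longrightarrow> \<bar>r' - (S - Sup (En S))\<bar> < \<delta>' \<longrightarrow> \<bar>w r' i - w (S - Sup (En S)) i\<bar> \<le> e"
        using w_cont'[OF p0 e] by blast
      have "Sup (En S) - \<delta>' < Sup (En S)" using \<delta>'(1) by simp
      then obtain d where d: "d \<in> En S" "Sup (En S) - \<delta>' < d"
        using less_cSupD[OF b(3)] by blast
      have dle: "d \<le> Sup (En S)" using cSup_upper[OF d(1) b(2)] .
      have d0: "0 \<le> d" "d \<le> S/2" using d(1) unfolding En_def by auto
      have "\<bar>(S - d) - (S - Sup (En S))\<bar> < \<delta>'" using d(2) dle by (simp add: abs_if)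
      moreover have "0 \<le> S - d" using d0 S by simp
      ultimately have "\<bar>w (S - d) i - w (S - Sup (En S)) i\<bar> \<le> e"
        by (rule \<delta>'(2)[rule_format, rotated])
      moreover have "w S i \<le> w (S - d) i + mg (S/2) / 2" using d(1) unfolding En_def by auto
      ultimately show "w S i \<le> w (S - Sup (En S)) i + mg (S/2) / 2 + e" by linarith
    qed
  qed
qed

lemma nxt_props: assumes "0 < S" shows "S < nxt S" "nxt S \<le> 2*S" "\<forall>i. w (nxt S) i \<le> w S i + mg S / 2"
  using Dn_sup[OF assms] unfolding nxt_def by auto

lemma prv_props: assumes "0 < S" shows "prv S < S" "S/2 \<le> prv S" "\<forall>i. w S i \<le> w (prv S) i + mg (S/2) / 2"
  using En_sup[OF assms] unfolding prv_def by auto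

end


context PS begin

lemma nxt_pos: "0 < S \<Longrightarrow> 0 < nxt S" using nxt_props(1) by force
lemma prv_pos: "0 < S \<Longrightarrow> 0 < prv S" using prv_props(2)[of S] by simp

lemma nxt_iter_ge1: "1 \<le> (nxt ^^ n) 1"
proof (induction n)
  case 0 then show ?case by simp
next
  case (Suc n) then show ?case using nxt_props(1)[of "(nxt ^^ n) 1"] by simp
qed

lemma prv_iter_pos: "0 < (prv ^^ n) 1"
  by (induction n) (auto intro: prv_pos)

lemma nxt_iter_mono: "m \<le> n \<Longrightarrow> (nxt ^^ m) 1 \<le> (nxt ^^ n) 1"
proof (induction n)
  case 0 then show ?case by simp
next
  case (Suc n)
  have "(nxt ^^ n) 1 \<le> (nxt ^^ Suc n) 1"
    using nxt_props(1)[of "(nxt ^^ n) 1"] nxt_iter_ge1[of n] by simp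
  then show ?case using Suc by (cases "m = Suc n") auto
qed

lemma prv_iter_anti: "m \<le> n \<Longrightarrow> (prv ^^ n) 1 \<le> (prv ^^ m) 1"
proof (induction n)
  case 0 then show ?case by simp
next
  case (Suc n)
  have "(prv ^^ Suc n) 1 \<le> (prv ^^ n) 1"
    using prv_props(1)[OF prv_iter_pos[of n]] by simp
  then show ?case using Suc by (cases "m = Suc n") auto
qed

lemma nxt_unbdd: "\<exists>n. M < (nxt ^^ n) 1"
proof (rule ccontr)
  assume "\<not> (\<exists>n. M < (nxt ^^ n) 1)"
  then have bd: "\<And>n. (nxt ^^ n) 1 \<le> M" by (simp add: not_less)
  define X where "X n = (nxt ^^ n) 1" for n
  define L where "L = Sup (range X)"
  have bX: "bdd_above (range X)" using bd unfolding X_def by (intro bdd_aboveI[where M=M]) auto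
  have XL: "X n \<le> L" for n unfolding L_def by (rule cSup_upper[OF _ bX]) simp
  have X1: "1 \<le> X n" for n unfolding X_def by (rule nxt_iter_ge1)
  have L1: "1 \<le> L" using XL[of 0] X1[of 0] by simp
  have m1: "0 < mg 1" by (rule mg_pos) simp
  have L0: "0 \<le> L" and m4: "0 < mg 1 / 4" using L1 m1 by auto
  obtain \<delta> where \<delta>: "\<delta> > 0" "\<forall>r' i. 0 \<le> r' \<longrightarrow> \<bar>r' - L\<bar> < \<delta> \<longrightarrow> \<bar>w r' i - w L i\<bar> \<le> mg 1 / 4"
    using w_cont'[OF L0 m4] by (elim exE conjE) blast
  have "L - min \<delta> (L/2) < L" using \<delta>(1) L1 by simp
  then obtain n where n: "L - min \<delta> (L/2) < X n"
    using less_cSupD[of "range X" "L - min \<delta> (L/2)"] unfolding L_def[symmetric] by auto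
  define S where "S = X n"
  have S: "L - \<delta> < S" "L/2 < S" "S \<le> L" "1 \<le> S" using n XL X1 unfolding S_def by auto
  define d where "d = min S (L + \<delta>/2 - S)"
  have d0: "0 < d" unfolding d_def using S \<delta>(1) by simp
  have "d \<in> Dn S"
  proof -
    have "w (S + d) i \<le> w S i + mg S / 2" for i
    proof -
      have a: "\<bar>w (S + d) i - w L i\<bar> \<le> mg 1 / 4"
        by (rule \<delta>(2)[rule_format]) (use S d0 in \<open>auto simp: d_def\<close>)
      have b: "\<bar>w S i - w L i\<bar> \<le> mg 1 / 4"
        by (rule \<delta>(2)[rule_format]) (use S in auto)
      have c: "mg 1 \<le> mg S" by (rule mg_mono) (use S in auto)
      show ?thesis using a b c unfolding abs_le_iff by linarith
    qed
    then show ?thesis unfolding Dn_def using d0 by (auto simp: d_def)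
  qed
  then have "d \<le> Sup (Dn S)" using Dn_basic(2)[of S] S by (intro cSup_upper) auto
  then have "S + d \<le> nxt S" unfolding nxt_def by simp
  moreover have "nxt S = X (Suc n)" unfolding S_def X_def by simp
  moreover have "L < S + d" unfolding d_def using S \<delta>(1) by simp
  ultimately show False using XL[of "Suc n"] by simp
qed

lemma prv_to0: assumes e: "0 < \<epsilon>" shows "\<exists>n. (prv ^^ n) 1 < \<epsilon>"
proof (rule ccontr)
  assume "\<not> (\<exists>n. (prv ^^ n) 1 < \<epsilon>)"
  then have bd: "\<And>n. \<epsilon> \<le> (prv ^^ n) 1" by (simp add: not_less)
  define Y where "Y n = (prv ^^ n) 1" for n
  define L where "L = Inf (range Y)"
  have bY: "bdd_below (range Y)" using bd unfolding Y_def by (intro bdd_belowI[where m="\<epsilon>"]) auto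
  have YL: "L \<le> Y n" for n unfolding L_def by (rule cInf_lower[OF _ bY]) simp
  have Le: "\<epsilon> \<le> L" unfolding L_def using bd unfolding Y_def by (intro cInf_greatest) auto
  have L0: "0 < L" using Le e by simp
  have m1: "0 < mg (L/2)" by (rule mg_pos) (use L0 in simp)
  have L00: "0 \<le> L" and m4: "0 < mg (L/2) / 4" using L0 m1 by auto
  obtain \<delta> where \<delta>: "\<delta> > 0" "\<forall>r' i. 0 \<le> r' \<longrightarrow> \<bar>r' - L\<bar> < \<delta> \<longrightarrow> \<bar>w r' i - w L i\<bar> \<le> mg (L/2) / 4"
    using w_cont'[OF L00 m4] by (elim exE conjE) blast
  have "L < L + min \<delta> L" using \<delta>(1) L0 by simp
  then obtain n where n: "Y n < L + min \<delta> L"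
    using cInf_lessD[of "range Y" "L + min \<delta> L"] unfolding L_def[symmetric] by auto
  define S where "S = Y n"
  have S: "S < L + \<delta>" "S < 2 * L" "L \<le> S" using n YL unfolding S_def by auto
  have S0: "0 < S" using S L0 by simp
  define d where "d = min (S/2) (S - L + \<delta>/2)"
  have d0: "0 < d" unfolding d_def using S S0 \<delta>(1) by simp
  have "d \<in> En S"
  proof -
    have "w S i \<le> w (S - d) i + mg (S/2) / 2" for i
    proof -
      have a: "\<bar>w (S - d) i - w L i\<bar> \<le> mg (L/2) / 4"
        by (rule \<delta>(2)[rule_format]) (use S S0 d0 \<delta>(1) in \<open>auto simp: d_def\<close>)
      have b: "\<bar>w S i - w L i\<bar> \<le> mg (L/2) / 4"
        by (rule \<delta>(2)[rule_format]) (use S L0 in auto)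
      have c: "mg (L/2) \<le> mg (S/2)" by (rule mg_mono) (use S L0 in auto)
      show ?thesis using a b c unfolding abs_le_iff by linarith
    qed
    moreover have "d \<le> S/2" unfolding d_def by (rule min.cobounded1)
    ultimately show ?thesis unfolding En_def using d0 by auto
  qed
  then have "d \<le> Sup (En S)" using En_basic(2)[OF S0] by (intro cSup_upper) auto
  then have "prv S \<le> S - d" unfolding prv_def by simp
  moreover have "prv S = Y (Suc n)" unfolding S_def Y_def by simp
  moreover have "S - d < L" unfolding d_def using S \<delta>(1) by (auto simp: min_def)
  ultimately show False using YL[of "Suc n"] by simp
qed

definition Sq :: "int \<Rightarrow> real" where
  "Sq k = (if 0 \<le> k then (nxt ^^ nat k) 1 else (prv ^^ nat (-k)) 1)"

lemma Sq_pos: "0 < Sq k"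
  unfolding Sq_def using nxt_iter_ge1 prv_iter_pos by (auto intro: less_le_trans[of 0 1])

lemma Sq_nxt: "0 \<le> k \<Longrightarrow> Sq (k+1) = nxt (Sq k)"
proof -
  assume k: "0 \<le> k"
  have "nat (k+1) = Suc (nat k)" using k by simp
  then show ?thesis unfolding Sq_def using k by simp
qed

lemma Sq_prv: "k < 0 \<Longrightarrow> Sq k = prv (Sq (k+1))"
proof -
  assume k: "k < 0"
  have e: "nat (-k) = Suc (nat (-(k+1)))" using k by simp
  show ?thesis
  proof (cases "k + 1 = 0")
    case True
    then have "Sq (k+1) = 1" unfolding Sq_def by simp
    moreover have "nat (- k) = 1" using True by simp
    ultimately show ?thesis unfolding Sq_def using k by simp
  next
    case False
    then have "k + 1 < 0" using k by simp
    then show ?thesis unfolding Sq_def using k e by simp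
  qed
qed

lemma Sq_less: "Sq k < Sq (k+1)"
proof (cases "0 \<le> k")
  case True then show ?thesis using Sq_nxt nxt_props(1)[OF Sq_pos] by simp
next
  case False then show ?thesis using Sq_prv[of k] prv_props(1)[OF Sq_pos[of "k+1"]] by simp
qed

lemma Sq_chain: "w (Sq (k+1)) i \<le> w (Sq k) i + mg (Sq k) / 2"
proof (cases "0 \<le> k")
  case True then show ?thesis using Sq_nxt nxt_props(3)[OF Sq_pos] by simp
next
  case False
  then have k: "Sq k = prv (Sq (k+1))" by (simp add: Sq_prv)
  have a: "w (Sq (k+1)) i \<le> w (Sq k) i + mg (Sq (k+1) / 2) / 2"
    using prv_props(3)[OF Sq_pos[of "k+1"]] k by simp
  have "mg (Sq (k+1) / 2) \<le> mg (Sq k)"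
    by (rule mg_mono) (use prv_props(2)[OF Sq_pos[of "k+1"]] k Sq_pos[of "k+1"] in auto)
  then show ?thesis using a by simp
qed

lemma Sq_strict: "k < l \<Longrightarrow> Sq k < Sq l"
proof -
  assume "k < l"
  then obtain n where l: "l = k + int (Suc n)" by (metis zless_iff_Suc_zadd)
  have "Sq k < Sq (k + int (Suc n))"
  proof (induction n)
    case 0 then show ?case using Sq_less[of k] by simp
  next
    case (Suc n)
    then show ?case using Sq_less[of "k + int (Suc n)"] by (simp add: add.assoc)
  qed
  then show ?thesis using l by simp
qed

lemma Sq_mono: "k \<le> l \<Longrightarrow> Sq k \<le> Sq l"
  using Sq_strict by (cases "k = l") (auto simp: less_imp_le)

lemma Sq_unbdd: "\<exists>k. M < Sq k"
proof -
  obtain n where "M < (nxt ^^ n) 1" using nxt_unbdd by blast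
  then show ?thesis unfolding Sq_def by (intro exI[of _ "int n"]) simp
qed

lemma Sq_to0: "0 < \<epsilon> \<Longrightarrow> \<exists>k. Sq k < \<epsilon>"
proof -
  assume "0 < \<epsilon>"
  then obtain n where n: "(prv ^^ n) 1 < \<epsilon>" using prv_to0 by blast
  show ?thesis
  proof (cases "n = 0")
    case True then show ?thesis using n by (intro exI[of _ 0]) (simp add: Sq_def)
  next
    case False then show ?thesis using n by (intro exI[of _ "- int n"]) (simp add: Sq_def)
  qed
qed

end


definition Rg :: "int \<Rightarrow> real" where "Rg k = 2 powr (real_of_int k)"

lemma Rg_pos: "0 < Rg k" unfolding Rg_def by simp

lemma Rg_Suc: "Rg (k+1) = 2 * Rg k"
  unfolding Rg_def by (simp add: powr_add)

lemma Rg_strict: "k < l \<Longrightarrow> Rg k < Rg l"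
  unfolding Rg_def by simp

lemma Rg_mono: "k \<le> l \<Longrightarrow> Rg k \<le> Rg l"
  unfolding Rg_def by simp

lemma Rg_mono_iff: "Rg k \<le> Rg l \<longleftrightarrow> k \<le> l"
  unfolding Rg_def by simp

lemma Rg_less_iff: "Rg k < Rg l \<longleftrightarrow> k < l"
  unfolding Rg_def by simp

lemma Rg_floor: "0 < r \<Longrightarrow> Rg \<lfloor>log 2 r\<rfloor> \<le> r \<and> r < Rg (\<lfloor>log 2 r\<rfloor> + 1)"
  unfolding Rg_def using floor_log_eq_powr_iff[of r 2 "\<lfloor>log 2 r\<rfloor>"] by simp

lemma Rg_floor_eq: "Rg k \<le> r \<Longrightarrow> r < Rg (k+1) \<Longrightarrow> \<lfloor>log 2 r\<rfloor> = k"
  using floor_log_eq_powr_iff[of r 2 k] Rg_pos[of k] unfolding Rg_def by simp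

lemma Rg_ex: "0 < r \<Longrightarrow> \<exists>k. Rg k \<le> r \<and> r < Rg (k+1)"
  using Rg_floor by blast

lemma Rg_small: "0 < e \<Longrightarrow> \<exists>k. Rg k < e"
proof -
  assume e: "0 < e"
  obtain k where "Rg k \<le> e / 2" "e/2 < Rg (k+1)" using Rg_ex[of "e/2"] e by auto
  then show ?thesis using e by (intro exI[of _ k]) simp
qed

lemma Rg_large: "\<exists>k. M < Rg k"
proof (cases "M > 0")
  case True
  obtain k where "Rg k \<le> M" "M < Rg (k+1)" using Rg_ex[OF True] by auto
  then show ?thesis by blast
next
  case False then show ?thesis using Rg_pos[of 0] by (intro exI[of _ 0]) simp
qed

definition pl :: "(int \<Rightarrow> real) \<Rightarrow> real \<Rightarrow> real" where
  "pl q r = (if r \<le> 0 then 0 else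
     q \<lfloor>log 2 r\<rfloor> + (r / Rg \<lfloor>log 2 r\<rfloor> - 1) * (q (\<lfloor>log 2 r\<rfloor> + 1) - q \<lfloor>log 2 r\<rfloor>))"

lemma pl_zero: "pl q 0 = 0" unfolding pl_def by simp

lemma pl_piece:
  assumes "Rg k \<le> r" "r \<le> Rg (k+1)"
  shows "pl q r = q k + (r / Rg k - 1) * (q (k+1) - q k)"
proof -
  have r0: "0 < r" using assms Rg_pos[of k] by linarith
  show ?thesis
  proof (cases "r < Rg (k+1)")
    case True
    then have "\<lfloor>log 2 r\<rfloor> = k" using Rg_floor_eq assms by blast
    then show ?thesis unfolding pl_def using r0 by simp
  next
    case False
    then have r: "r = Rg (k+1)" using assms by simp
    have "\<lfloor>log 2 r\<rfloor> = k + 1" using Rg_floor_eq[of "k+1" r] r Rg_strict[of "k+1" "k+2"]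
      by (simp add: add.assoc)
    then have "pl q r = q (k+1)" unfolding pl_def using r0 r by simp
    moreover have "r / Rg k - 1 = 1" using r Rg_Suc[of k] Rg_pos[of k] by simp
    ultimately show ?thesis by simp
  qed
qed

lemma pl_at: "pl q (Rg k) = q k"
  using pl_piece[of k "Rg k" q] Rg_pos[of k] Rg_strict[of k "k+1"] by simp

lemma pl_piece_diff:
  assumes "Rg k \<le> x" "x \<le> y" "y \<le> Rg (k+1)"
  shows "pl q y - pl q x = (y - x) * ((q (k+1) - q k) / Rg k)"
proof -
  have "pl q y - pl q x = (y / Rg k - x / Rg k) * (q (k+1) - q k)"
    using pl_piece[of k x q] pl_piece[of k y q] assms by (simp add: algebra_simps)
  also have "\<dots> = (y - x) * ((q (k+1) - q k) / Rg k)"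
    using Rg_pos[of k] by (simp add: field_simps)
  finally show ?thesis .
qed

lemma pl_slope_aux:
  assumes lo: "\<And>k. a \<le> k \<Longrightarrow> k < a + int n \<Longrightarrow> c * Rg k \<le> q (k+1) - q k"
      and hi: "\<And>k. a \<le> k \<Longrightarrow> k < a + int n \<Longrightarrow> q (k+1) - q k \<le> C * Rg k"
      and x: "Rg a \<le> x" "x \<le> y" "y \<le> Rg (a + int n)"
  shows "c * (y - x) \<le> pl q y - pl q x \<and> pl q y - pl q x \<le> C * (y - x)"
  using lo hi x
proof (induction n arbitrary: x y)
  case 0
  then have "x = y" using Rg_pos by simp
  then show ?case by simp
next
  case (Suc n)
  define b where "b = a + int n"
  have bS: "a + int (Suc n) = b + 1" unfolding b_def by simp
  have IH: "\<And>x y. Rg a \<le> x \<Longrightarrow> x \<le> y \<Longrightarrow> y \<le> Rg b \<Longrightarrow>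
      c * (y - x) \<le> pl q y - pl q x \<and> pl q y - pl q x \<le> C * (y - x)"
    using Suc.IH Suc.prems(1,2) unfolding b_def by force
  have piece: "c * (y - x) \<le> pl q y - pl q x \<and> pl q y - pl q x \<le> C * (y - x)"
    if "Rg b \<le> x" "x \<le> y" "y \<le> Rg (b+1)" for x y
  proof -
    have "a \<le> b" "b < a + int (Suc n)" unfolding b_def by auto
    then have l: "c * Rg b \<le> q (b+1) - q b" and h: "q (b+1) - q b \<le> C * Rg b"
      using Suc.prems(1,2) by auto
    obtain sl where sl: "sl = (q (b+1) - q b) / Rg b" by blast
    have eq: "pl q y - pl q x = (y - x) * sl"
      unfolding sl by (rule pl_piece_diff) (use that in auto)
    have yx: "0 \<le> y - x" using that by simp
    have c1: "c \<le> sl" using l Rg_pos[of b] unfolding sl by (simp add: field_simps)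
    have c2: "sl \<le> C" using h Rg_pos[of b] unfolding sl by (simp add: field_simps)
    have "c * (y - x) \<le> sl * (y - x)" by (rule mult_right_mono[OF c1 yx])
    moreover have "sl * (y - x) \<le> C * (y - x)" by (rule mult_right_mono[OF c2 yx])
    ultimately show ?thesis unfolding eq by (simp add: mult.commute)
  qed
  have xy: "Rg a \<le> x" "x \<le> y" "y \<le> Rg (b + 1)" using Suc.prems(3-5) unfolding bS[symmetric] by auto
  have ab: "Rg a \<le> Rg b" unfolding b_def by (rule Rg_mono) simp
  show ?case
  proof (cases "y \<le> Rg b")
    case True then show ?thesis using IH xy by blast
  next
    case False
    note yb = False
    show ?thesis
    proof (cases "Rg b \<le> x")
      case True then show ?thesis using piece xy by blast
    next
      case False
      have 1: "c * (Rg b - x) \<le> pl q (Rg b) - pl q x \<and> pl q (Rg b) - pl q x \<le> C * (Rg b - x)"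
        using IH[of x "Rg b"] xy False by auto
      have 2: "c * (y - Rg b) \<le> pl q y - pl q (Rg b) \<and> pl q y - pl q (Rg b) \<le> C * (y - Rg b)"
        using piece[of "Rg b" y] xy yb by auto
      from 1 2 show ?thesis by (simp add: algebra_simps)
    qed
  qed
qed

lemma pl_slope:
  assumes ab: "a \<le> b"
      and lo: "\<And>k. a \<le> k \<Longrightarrow> k < b \<Longrightarrow> c * Rg k \<le> q (k+1) - q k"
      and hi: "\<And>k. a \<le> k \<Longrightarrow> k < b \<Longrightarrow> q (k+1) - q k \<le> C * Rg k"
      and x: "Rg a \<le> x" "x \<le> y" "y \<le> Rg b"
  shows "c * (y - x) \<le> pl q y - pl q x \<and> pl q y - pl q x \<le> C * (y - x)"
proof -
  obtain n where n: "b = a + int n" using ab by (metis zle_iff_zadd)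
  show ?thesis by (rule pl_slope_aux[of a n c q C x y]) (use lo hi x n in auto)
qed


lemma strict_gen:
  fixes q :: "int \<Rightarrow> real" and k l :: int
  assumes s: "\<And>k. q k < q (k+1)" and kl: "k < l"
  shows "q k < q l"
proof -
  obtain n where l: "l = k + int (Suc n)" using kl by (metis zless_iff_Suc_zadd)
  have "q k < q (k + int (Suc n))"
  proof (induction n)
    case 0 then show ?case using s[of k] by simp
  next
    case (Suc n) then show ?case using s[of "k + int (Suc n)"] by (simp add: add.assoc)
  qed
  then show ?thesis using l by simp
qed

lemma mono_gen:
  fixes q :: "int \<Rightarrow> real" and k l :: int
  assumes s: "\<And>k. q k < q (k+1)" and kl: "k \<le> l"
  shows "q k \<le> q l"
proof (cases "k = l")
  case True then show ?thesis by simp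
next
  case False then have "k < l" using kl by simp
  then show ?thesis using strict_gen[of q k l] s by (simp add: less_imp_le)
qed

locale PLq =
  fixes q :: "int \<Rightarrow> real"
  assumes qs: "\<And>k. q k < q (k+1)" and qp: "\<And>k. 0 < q k"
    and q0: "\<And>e. 0 < e \<Longrightarrow> \<exists>k. q k < e" and qinf: "\<And>M. \<exists>k. M < q k"
begin

lemma q_mono: "k \<le> l \<Longrightarrow> q k \<le> q l" using mono_gen[of q k l] qs by blast

lemma pl_piece_bounds: "Rg k \<le> r \<Longrightarrow> r \<le> Rg (k+1) \<Longrightarrow> q k \<le> pl q r \<and> pl q r \<le> q (k+1)"
proof -
  assume a: "Rg k \<le> r" "r \<le> Rg (k+1)"
  have t: "0 \<le> r / Rg k - 1" "r / Rg k - 1 \<le> 1"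
    using a Rg_pos[of k] Rg_Suc[of k] by (auto simp: field_simps)
  have d: "0 \<le> q (k+1) - q k" using qs[of k] by simp
  have "0 \<le> (r / Rg k - 1) * (q (k+1) - q k)" using t d by simp
  moreover have "(r / Rg k - 1) * (q (k+1) - q k) \<le> 1 * (q (k+1) - q k)"
    by (rule mult_right_mono[OF t(2) d])
  ultimately show ?thesis using pl_piece[OF a, of q] by simp
qed

lemma pl_pos: "0 < r \<Longrightarrow> 0 < pl q r"
proof -
  assume r: "0 < r"
  obtain k where "Rg k \<le> r" "r < Rg (k+1)" using Rg_ex[OF r] by blast
  then show ?thesis using pl_piece_bounds[of k r] qp[of k] by auto
qed

lemma pl_bilip:
  assumes ab: "a < b"
  shows "\<exists>c C. 0 < c \<and> c \<le> C \<and> (\<forall>x y. Rg a \<le> x \<longrightarrow> x \<le> y \<longrightarrow> y \<le> Rg b \<longrightarrow>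
            c * (y - x) \<le> pl q y - pl q x \<and> pl q y - pl q x \<le> C * (y - x))"
proof -
  define sl where "sl k = (q (k+1) - q k) / Rg k" for k
  define K where "K = sl ` {a..<b}"
  have fK: "finite K" "K \<noteq> {}" unfolding K_def using ab by auto
  define c where "c = Min K"
  define C where "C = Max K"
  have slp: "0 < sl k" for k unfolding sl_def using qs[of k] Rg_pos[of k] by simp
  have c0: "0 < c" unfolding c_def using fK slp K_def by (auto simp: Min_gr_iff)
  have "sl a \<in> K" unfolding K_def using ab by simp
  then have cC: "c \<le> C" unfolding c_def C_def using fK by (meson Max_ge Min_le order_trans)
  have lo: "c * Rg k \<le> q (k+1) - q k" if "a \<le> k" "k < b" for k
  proof -
    have "c \<le> sl k" unfolding c_def K_def using fK that by (auto intro: Min_le simp: K_def)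
    then show ?thesis unfolding sl_def using Rg_pos[of k] by (simp add: field_simps)
  qed
  have hi: "q (k+1) - q k \<le> C * Rg k" if "a \<le> k" "k < b" for k
  proof -
    have "sl k \<le> C" unfolding C_def K_def using fK that by (auto intro: Max_ge simp: K_def)
    then show ?thesis unfolding sl_def using Rg_pos[of k] by (simp add: field_simps)
  qed
  show ?thesis
    using c0 cC pl_slope[of a b c q C] lo hi ab by (intro exI[of _ c] exI[of _ C]) auto
qed

lemma pl_strict: "0 \<le> x \<Longrightarrow> x < y \<Longrightarrow> pl q x < pl q y"
proof -
  assume x: "0 \<le> x" and xy: "x < y"
  show ?thesis
  proof (cases "x = 0")
    case True then show ?thesis using pl_pos[of y] xy by (simp add: pl_zero)
  next
    case False
    then have x0: "0 < x" using x by simp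
    obtain a where a: "Rg a \<le> x" "x < Rg (a+1)" using Rg_ex[OF x0] by blast
    obtain b where b: "Rg b \<le> y" "y < Rg (b+1)" using Rg_ex[of y] x0 xy by auto
    have "Rg a < Rg (b+1)" using a b xy by linarith
    then have ab: "a < b + 1" by (simp add: Rg_less_iff)
    obtain c C where cC: "0 < c" "\<And>x y. Rg a \<le> x \<Longrightarrow> x \<le> y \<Longrightarrow> y \<le> Rg (b+1) \<Longrightarrow>
            c * (y - x) \<le> pl q y - pl q x" using pl_bilip[OF ab] by blast
    have "c * (y - x) \<le> pl q y - pl q x" using cC(2)[of x y] a b xy by auto
    moreover have "0 < c * (y - x)" using cC(1) xy by simp
    ultimately show ?thesis by simp
  qed
qed

lemma pl_mono: "0 \<le> x \<Longrightarrow> x \<le> y \<Longrightarrow> pl q x \<le> pl q y"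
  using pl_strict[of x y] by (cases "x = y") auto

lemma pl_nn: "0 \<le> x \<Longrightarrow> 0 \<le> pl q x"
  using pl_mono[of 0 x] by (simp add: pl_zero)

lemma pl_cont: "continuous_on {0..} (pl q)"
proof -
  have "continuous (at x within {0..}) (pl q)" if x: "x \<in> {0..}" for x
  proof (cases "x = 0")
    case True
    show ?thesis unfolding continuous_within_eps_delta
    proof (intro allI impI)
      fix e :: real assume e: "0 < e"
      obtain k where k: "q k < e" using q0[OF e] by blast
      show "\<exists>d>0. \<forall>x'\<in>{0..}. dist x' x < d \<longrightarrow> dist (pl q x') (pl q x) < e"
      proof (intro exI[of _ "Rg k"] conjI ballI impI)
        show "0 < Rg k" by (rule Rg_pos)
        fix x' :: real assume x': "x' \<in> {0..}" "dist x' x < Rg k"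
        have "pl q x' \<le> pl q (Rg k)" using x' True by (intro pl_mono) (auto simp: dist_real_def)
        then have "pl q x' < e" using k by (simp add: pl_at)
        then show "dist (pl q x') (pl q x) < e" using True pl_nn[of x'] x' by (simp add: dist_real_def pl_zero)
      qed
    qed
  next
    case False
    then have x0: "0 < x" using x by simp
    obtain k where k: "Rg k \<le> x" "x < Rg (k+1)" using Rg_ex[OF x0] by blast
    have lt: "Rg (k - 1) < x" using k(1) Rg_strict[of "k-1" k] by simp
    obtain c C where cC: "0 < c" "c \<le> C" "\<And>x y. Rg (k-1) \<le> x \<Longrightarrow> x \<le> y \<Longrightarrow> y \<le> Rg (k+1) \<Longrightarrow>
            c * (y - x) \<le> pl q y - pl q x \<and> pl q y - pl q x \<le> C * (y - x)"
      using pl_bilip[of "k-1" "k+1"] by auto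
    show ?thesis unfolding continuous_within_eps_delta
    proof (intro allI impI)
      fix e :: real assume e: "0 < e"
      define d where "d = min (min (x - Rg (k-1)) (Rg (k+1) - x)) (e / (C + 1))"
      have C0: "0 < C + 1" using cC by simp
      have d0: "0 < d" unfolding d_def using lt k e C0 by simp
      show "\<exists>d>0. \<forall>x'\<in>{0..}. dist x' x < d \<longrightarrow> dist (pl q x') (pl q x) < e"
      proof (intro exI[of _ d] conjI ballI impI)
        show "0 < d" by (rule d0)
        fix x' :: real assume x': "x' \<in> {0..}" "dist x' x < d"
        have ax: "\<bar>x' - x\<bar> < d" using x' by (simp add: dist_real_def)
        have in1: "Rg (k-1) \<le> x'" "x' \<le> Rg (k+1)" using ax unfolding d_def by auto
        have "\<bar>pl q x' - pl q x\<bar> \<le> C * \<bar>x' - x\<bar>"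
        proof (cases "x \<le> x'")
          case True
          then have h: "c * (x' - x) \<le> pl q x' - pl q x" "pl q x' - pl q x \<le> C * (x' - x)"
            using cC(3)[of x x'] in1 lt k by auto
          have "0 \<le> c * (x' - x)" using cC(1) True by simp
          then show ?thesis using h True by simp
        next
          case False
          then have h: "c * (x - x') \<le> pl q x - pl q x'" "pl q x - pl q x' \<le> C * (x - x')"
            using cC(3)[of x' x] in1 lt k by auto
          have "0 \<le> c * (x - x')" using cC(1) False by simp
          then show ?thesis using h False by (simp add: abs_minus_commute)
        qed
        also have "\<dots> \<le> C * d" using ax cC by (intro mult_left_mono) auto
        also have "\<dots> < (C + 1) * d" using d0 by simp
        also have "\<dots> \<le> (C + 1) * (e / (C + 1))" using C0 unfolding d_def by (intro mult_left_mono) auto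
        also have "\<dots> = e" using C0 by simp
        finally show "dist (pl q x') (pl q x) < e" by (simp add: dist_real_def)
      qed
    qed
  qed
  then show ?thesis using continuous_on_eq_continuous_within by blast
qed

lemma pl_Kinf: "Kinf (pl q)"
  unfolding Kinf_def
proof (intro conjI allI)
  show "continuous_on {0..} (pl q)" by (rule pl_cont)
  show "strict_mono_on {0..} (pl q)" unfolding strict_mono_on_def using pl_strict by auto
  show "pl q 0 = 0" by (rule pl_zero)
  fix M
  obtain k where "M < q k" using qinf by blast
  then show "\<exists>x\<ge>0. M < pl q x" using Rg_pos[of k] by (intro exI[of _ "Rg k"]) (simp add: pl_at less_imp_le)
qed

end

lemma Kinf_surj: "Kinf f \<Longrightarrow> 0 \<le> y \<Longrightarrow> \<exists>x\<ge>0. f x = y"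
proof -
  assume f: "Kinf f" and y: "0 \<le> y"
  obtain X where X: "X \<ge> 0" "y < f X" using Kinf_unbdd[OF f] by blast
  have "\<exists>x. 0 \<le> x \<and> x \<le> X \<and> f x = y"
    by (rule IVT') (use X y Kinf_zero[OF f] continuous_on_subset[OF Kinf_cont[OF f]] in auto)
  then show ?thesis by blast
qed

lemma Kinf_inv: "Kinf f \<Longrightarrow> 0 \<le> y \<Longrightarrow> 0 \<le> inv_into {0..} f y \<and> f (inv_into {0..} f y) = y"
proof -
  assume f: "Kinf f" and y: "0 \<le> y"
  have "y \<in> f ` {0..}" using Kinf_surj[OF f y] by auto
  then show ?thesis using inv_into_into[of y f "{0..}"] f_inv_into_f[of y f "{0..}"] by auto
qed

lemma inv_bilip:
  assumes f: "Kinf f" and A: "0 \<le> A" "A \<le> B" and c: "0 < c" and cC: "c \<le> C"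
    and sl: "\<And>x y. A \<le> x \<Longrightarrow> x \<le> y \<Longrightarrow> y \<le> B \<Longrightarrow> c * (y - x) \<le> f y - f x \<and> f y - f x \<le> C * (y - x)"
    and y1: "f A \<le> y1" "y1 \<le> f B" and y2: "f A \<le> y2" "y2 \<le> f B"
  shows "(1/C) * \<bar>y1 - y2\<bar> \<le> \<bar>inv_into {0..} f y1 - inv_into {0..} f y2\<bar>
       \<and> \<bar>inv_into {0..} f y1 - inv_into {0..} f y2\<bar> \<le> (1/c) * \<bar>y1 - y2\<bar>"
proof -
  have fA: "0 \<le> f A" using Kinf_nonneg[OF f A(1)] .
  define x1 where "x1 = inv_into {0..} f y1"
  define x2 where "x2 = inv_into {0..} f y2"
  have i1: "0 \<le> x1" "f x1 = y1" using Kinf_inv[OF f, of y1] y1 fA unfolding x1_def by auto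
  have i2: "0 \<le> x2" "f x2 = y2" using Kinf_inv[OF f, of y2] y2 fA unfolding x2_def by auto
  have inr: "A \<le> x \<and> x \<le> B" if "0 \<le> x" "f A \<le> f x" "f x \<le> f B" for x
  proof -
    have "\<not> x < A" using Kinf_strict[OF f that(1)] that(2) by (meson not_le)
    moreover have "\<not> B < x" using Kinf_strict[OF f, of B x] A that(3) by (meson not_le order_trans)
    ultimately show ?thesis by simp
  qed
  have r1: "A \<le> x1" "x1 \<le> B" using inr[of x1] i1 y1 by auto
  have r2: "A \<le> x2" "x2 \<le> B" using inr[of x2] i2 y2 by auto
  have C0: "0 < C" using cC c by simp
  have main: "(1/C) * \<bar>f u - f v\<bar> \<le> \<bar>u - v\<bar> \<and> \<bar>u - v\<bar> \<le> (1/c) * \<bar>f u - f v\<bar>"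
    if "A \<le> u" "u \<le> v" "v \<le> B" for u v
  proof -
    have s: "c * (v - u) \<le> f v - f u" "f v - f u \<le> C * (v - u)" using sl[OF that] by auto
    have vu: "0 \<le> v - u" using that by simp
    have p: "0 \<le> f v - f u" using s(1) mult_nonneg_nonneg[of c "v - u"] c vu by linarith
    have e1: "\<bar>f u - f v\<bar> = f v - f u" "\<bar>u - v\<bar> = v - u" using p that(2) by auto
    have a1: "v - u \<le> (f v - f u) / c" using s(1) c by (simp add: pos_le_divide_eq mult.commute)
    have a2: "(f v - f u) / C \<le> v - u" using s(2) C0 by (simp add: pos_divide_le_eq mult.commute)
    show ?thesis unfolding e1 using a1 a2 by simp
  qed
  show ?thesis
  proof (cases "x1 \<le> x2")
    case True then show ?thesis using main[of x1 x2] r1 r2 i1 i2 unfolding x1_def x2_def by simp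
  next
    case False then show ?thesis using main[of x2 x1] r1 r2 i1 i2 unfolding x1_def x2_def
      by (simp add: abs_minus_commute)
  qed
qed


lemma Kinf_small:
  assumes f: "Kinf f" and e: "0 < e"
  shows "\<exists>d>0. \<forall>x. 0 \<le> x \<longrightarrow> x < d \<longrightarrow> f x < e"
proof -
  have "\<forall>x\<in>{0..}. continuous (at x within {0..}) f"
    using Kinf_cont[OF f] unfolding continuous_on_eq_continuous_within .
  then have "continuous (at 0 within {0..}) f" by simp
  then obtain d where d: "d > 0" "\<forall>x'\<in>{0..}. dist x' 0 < d \<longrightarrow> dist (f x') (f 0) < e"
    unfolding continuous_within_eps_delta using e by blast
  show ?thesis
  proof (intro exI[of _ d] conjI allI impI)
    show "d > 0" by fact
    fix x :: real assume "0 \<le> x" "x < d"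
    then have "dist (f x) (f 0) < e" using d(2) by (auto simp: dist_real_def)
    then show "f x < e" using Kinf_zero[OF f] by (simp add: dist_real_def)
  qed
qed

definition lam :: "int \<Rightarrow> real" where
  "lam k = (if 0 \<le> k then 1 - 1 / (real_of_int k + 2) else 1 / (2 - real_of_int k))"

lemma lam_bounds: "0 < lam k \<and> lam k < 1"
proof (cases "0 \<le> k")
  case True
  then have a: "0 < 1 / (real_of_int k + 2)" "1 / (real_of_int k + 2) < 1" by auto
  then show ?thesis using True unfolding lam_def by simp
next
  case False
  then have a: "0 < 1 / (2 - real_of_int k)" "1 / (2 - real_of_int k) < 1" by auto
  then show ?thesis using False unfolding lam_def by simp
qed

lemma lam_strict: "lam k < lam (k+1)"
proof (cases "0 \<le> k")
  case True
  have "1 / (real_of_int k + 3) < 1 / (real_of_int k + 2)"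
    using True by (intro divide_strict_left_mono) auto
  then show ?thesis using True unfolding lam_def by (simp add: add.assoc)
next
  case False
  show ?thesis
  proof (cases "k = -1")
    case True then show ?thesis unfolding lam_def by simp
  next
    case False
    then have k: "k + 1 < 0" using \<open>\<not> 0 \<le> k\<close> by simp
    have "1 / (2 - real_of_int k) < 1 / (2 - real_of_int (k+1))"
      using k by (intro divide_strict_left_mono) auto
    then show ?thesis using k \<open>\<not> 0 \<le> k\<close> unfolding lam_def by simp
  qed
qed

lemma lam_half: "0 \<le> k \<Longrightarrow> 1/2 \<le> lam k"
proof -
  assume k: "0 \<le> k"
  have "1 / (real_of_int k + 2) \<le> 1/2" using k by (intro divide_left_mono) auto
  then show ?thesis using k unfolding lam_def by simp
qed

lemma lam_mono: "k \<le> l \<Longrightarrow> lam k \<le> lam l"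
  using mono_gen[of lam k l] lam_strict by blast

context PS begin

definition aa :: "int \<Rightarrow> 'i \<Rightarrow> real" where "aa k = Gr2 (w (Sq (k+1)))"
definition bb :: "int \<Rightarrow> 'i \<Rightarrow> real" where "bb k = w (Sq k)"
definition pp :: "int \<Rightarrow> 'i \<Rightarrow> real" where "pp k i = aa k i + lam k * (bb k i - aa k i)"

lemma Sq_nn: "0 \<le> Sq k" using Sq_pos[of k] by simp

lemma aa_nn: "0 \<le> aa k i" unfolding aa_def by (rule Gr2_nn[OF w_nn[OF Sq_nn]])

lemma aa_mono: "aa k i \<le> aa (k+1) i"
  unfolding aa_def
  by (rule Gr2_mono[OF w_nn[OF Sq_nn]]) (rule w_mono[OF Sq_nn], rule Sq_mono, simp)

lemma bb_mono: "bb k i \<le> bb (k+1) i"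
  unfolding bb_def by (rule w_mono[OF Sq_nn], rule Sq_mono, simp)

lemma width: "mg (Sq k) / 2 \<le> bb k i - aa k i"
proof -
  have "aa k i \<le> w (Sq (k+1)) i - mg (Sq (k+1))" unfolding aa_def by (rule margin[OF Sq_pos])
  moreover have "w (Sq (k+1)) i \<le> w (Sq k) i + mg (Sq k) / 2" by (rule Sq_chain)
  moreover have "mg (Sq k) \<le> mg (Sq (k+1))" by (rule mg_mono[OF Sq_nn Sq_mono]) simp
  ultimately show ?thesis unfolding bb_def by linarith
qed

lemma mg_Sq_pos: "0 < mg (Sq k)" by (rule mg_pos[OF Sq_pos])

lemma ab_le: "aa k i \<le> bb k i" using width[of k i] mg_Sq_pos[of k] by linarith

lemma pp_le_bb: "pp k i \<le> bb k i"
proof -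
  have "lam k * (bb k i - aa k i) \<le> 1 * (bb k i - aa k i)"
    using lam_bounds[of k] ab_le[of k i] by (intro mult_right_mono) auto
  then show ?thesis unfolding pp_def by simp
qed

lemma pp_ge_aa: "aa k i \<le> pp k i"
  unfolding pp_def using lam_bounds[of k] ab_le[of k i] by simp

lemma pp_ge: "lam k * Sq k \<le> pp k i"
proof -
  have "pp k i = (1 - lam k) * aa k i + lam k * bb k i" unfolding pp_def by (simp add: algebra_simps)
  moreover have "0 \<le> (1 - lam k) * aa k i" using lam_bounds[of k] aa_nn[of k i] by simp
  moreover have "lam k * Sq k \<le> lam k * bb k i"
    unfolding bb_def using lam_bounds[of k] w_ge[OF Sq_nn] by (intro mult_left_mono) auto
  ultimately show ?thesis by linarith
qed

lemma pp_pos: "0 < pp k i"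
proof -
  have "0 < lam k * Sq k" using lam_bounds[of k] Sq_pos[of k] by simp
  then show ?thesis using pp_ge[of k i] by linarith
qed

lemma pp_le_phi: "pp k i \<le> \<phi> (Sq k)"
  using pp_le_bb[of k i] w_le_phi[OF Sq_nn] unfolding bb_def by (meson order_trans)

lemma pp_inc: "(lam (k+1) - lam k) * (mg (Sq k) / 2) \<le> pp (k+1) i - pp k i"
proof -
  define l1 where "l1 = lam (k+1)"
  define l0 where "l0 = lam k"
  have eq: "pp (k+1) i - pp k i = (1 - l1) * (aa (k+1) i - aa k i) + l1 * (bb (k+1) i - bb k i)
      + (l1 - l0) * (bb k i - aa k i)"
    unfolding pp_def l1_def l0_def by (simp add: algebra_simps)
  have "0 \<le> (1 - l1) * (aa (k+1) i - aa k i)" using lam_bounds[of "k+1"] aa_mono[of k i] unfolding l1_def by simp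
  moreover have "0 \<le> l1 * (bb (k+1) i - bb k i)" using lam_bounds[of "k+1"] bb_mono[of k i] unfolding l1_def by simp
  moreover have "(l1 - l0) * (mg (Sq k) / 2) \<le> (l1 - l0) * (bb k i - aa k i)"
    using width[of k i] lam_strict[of k] unfolding l1_def l0_def by (intro mult_left_mono) auto
  ultimately show ?thesis unfolding eq l1_def[symmetric] l0_def[symmetric] by linarith
qed

lemma pp_inc_up: "pp (k+1) i - pp k i \<le> \<phi> (Sq (k+1))"
  using pp_le_phi[of "k+1" i] pp_pos[of k i] by simp

lemma pp_strict: "pp k i < pp (k+1) i"
proof -
  have "0 < (lam (k+1) - lam k) * (mg (Sq k) / 2)"
    using lam_strict[of k] mg_Sq_pos[of k] by simp
  then show ?thesis using pp_inc[of k i] by linarith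
qed

lemma phi_small: "0 < e \<Longrightarrow> \<exists>k. \<phi> (Sq k) < e"
proof -
  assume e: "0 < e"
  obtain d where d: "d > 0" "\<forall>x. 0 \<le> x \<longrightarrow> x < d \<longrightarrow> \<phi> x < e" using Kinf_small[OF phiK e] by blast
  obtain k where "Sq k < d" using Sq_to0[OF d(1)] by blast
  then show ?thesis using d(2) Sq_nn[of k] by blast
qed

lemma lamSq_large: "\<exists>k. M < lam k * Sq k"
proof -
  obtain k where k: "max (2*M) 1 < Sq k" using Sq_unbdd by blast
  have "Sq 0 = 1" unfolding Sq_def by simp
  then have "0 < k" using k Sq_mono[of k 0] by (cases "0 < k") auto
  then have "1/2 \<le> lam k" using lam_half by simp
  then have "Sq k / 2 \<le> lam k * Sq k" using Sq_pos[of k] by (simp add: mult_right_mono[of "1/2" "lam k" "Sq k", simplified])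
  then show ?thesis using k by (intro exI[of _ k]) linarith
qed

lemma lamSq_mono: "k \<le> l \<Longrightarrow> lam k * Sq k \<le> lam l * Sq l"
  using lam_mono[of k l] Sq_mono[of k l] lam_bounds[of k] Sq_pos[of k]
  by (intro mult_mono) auto

lemma PLq_pp: "PLq (\<lambda>k. pp k i)"
proof
  show "\<And>k. pp k i < pp (k+1) i" by (rule pp_strict)
  show "\<And>k. 0 < pp k i" by (rule pp_pos)
  show "\<And>e. 0 < e \<Longrightarrow> \<exists>k. pp k i < e" using phi_small pp_le_phi by (meson le_less_trans)
  show "\<And>M. \<exists>k. M < pp k i" using lamSq_large pp_ge by (meson less_le_trans)
qed

definition qmin :: "int \<Rightarrow> real" where "qmin k = lam (k-1) * Sq (k-1)"
definition qmax :: "int \<Rightarrow> real" where "qmax k = \<phi> (Sq (k+1))"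

lemma PLq_qmin: "PLq qmin"
proof
  fix k
  show "qmin k < qmin (k+1)" unfolding qmin_def
    using lam_strict[of "k-1"] Sq_less[of "k-1"] lam_bounds[of "k-1"] Sq_pos[of "k-1"]
    by (simp add: mult_strict_mono)
  show "0 < qmin k" unfolding qmin_def using lam_bounds[of "k-1"] Sq_pos[of "k-1"] by simp
next
  fix e :: real assume e: "0 < e"
  obtain k where k: "Sq k < e" using Sq_to0[OF e] by blast
  have "lam k * Sq k \<le> 1 * Sq k" using lam_bounds[of k] Sq_pos[of k] by (intro mult_right_mono) auto
  then show "\<exists>k. qmin k < e" using k unfolding qmin_def by (intro exI[of _ "k+1"]) simp
next
  fix M
  obtain k where "M < lam k * Sq k" using lamSq_large by blast
  then show "\<exists>k. M < qmin k" unfolding qmin_def by (intro exI[of _ "k+1"]) simp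
qed

lemma PLq_qmax: "PLq qmax"
proof
  fix k
  show "qmax k < qmax (k+1)" unfolding qmax_def
    using Kinf_strict[OF phiK Sq_nn Sq_less[of "k+1"]] by (simp add: add.assoc)
  show "0 < qmax k" unfolding qmax_def using Kinf_pos[OF phiK Sq_pos] .
next
  fix e :: real assume "0 < e"
  then obtain k where "\<phi> (Sq k) < e" using phi_small by blast
  then show "\<exists>k. qmax k < e" unfolding qmax_def by (intro exI[of _ "k-1"]) simp
next
  fix M
  obtain x where x: "x \<ge> 0" "M < \<phi> x" using Kinf_unbdd[OF phiK] by blast
  obtain k where k: "x < Sq k" using Sq_unbdd by blast
  have "\<phi> x < \<phi> (Sq k)" by (rule Kinf_strict[OF phiK x(1) k])
  then show "\<exists>k. M < qmax k" unfolding qmax_def using x by (intro exI[of _ "k-1"]) simp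
qed

definition sig :: "real \<Rightarrow> 'i \<Rightarrow> real" where "sig r i = pl (\<lambda>k. pp k i) r"

lemma sig_Kinf: "Kinf (\<lambda>r. sig r i)"
  unfolding sig_def using PLq.pl_Kinf[OF PLq_pp] by simp

lemma sig_piece: "Rg k \<le> r \<Longrightarrow> r \<le> Rg (k+1) \<Longrightarrow> pp k i \<le> sig r i \<and> sig r i \<le> pp (k+1) i"
  unfolding sig_def by (rule PLq.pl_piece_bounds[OF PLq_pp])

lemma sig_zero: "sig 0 i = 0" unfolding sig_def by (rule pl_zero)

lemma sig_bounds: "0 \<le> r \<Longrightarrow> pl qmin r \<le> sig r i \<and> sig r i \<le> pl qmax r"
proof -
  assume r: "0 \<le> r"
  show ?thesis
  proof (cases "r = 0")
    case True then show ?thesis by (simp add: sig_zero pl_zero)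
  next
    case False
    then have r0: "0 < r" using r by simp
    obtain k where k: "Rg k \<le> r" "r < Rg (k+1)" using Rg_ex[OF r0] by blast
    have s: "pp k i \<le> sig r i" "sig r i \<le> pp (k+1) i" using sig_piece[of k r i] k by auto
    have m1: "pl qmin r \<le> qmin (k+1)" using PLq.pl_piece_bounds[OF PLq_qmin, of k r] k by auto
    have m2: "qmax k \<le> pl qmax r" using PLq.pl_piece_bounds[OF PLq_qmax, of k r] k by auto
    have "qmin (k+1) \<le> pp k i" unfolding qmin_def using pp_ge[of k i] by simp
    moreover have "pp (k+1) i \<le> qmax k" unfolding qmax_def using pp_le_phi[of "k+1" i] by simp
    ultimately show ?thesis using s m1 m2 by linarith
  qed
qed

lemma sig_nn: "0 \<le> r \<Longrightarrow> 0 \<le> sig r i"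
  using Kinf_nonneg[OF sig_Kinf] by blast

lemma sig_lp: "0 \<le> r \<Longrightarrow> sig r \<in> linf_pos"
  using sig_nn sig_bounds by (intro linf_posI[where B="pl qmax r"]) auto

lemma Gr2_zero: "Gr2 (\<lambda>_. 0) i = 0"
  by (simp add: Gr2_def' G_zero Kinf_zero[OF rhoK])

lemma sig_decay: "0 \<le> r \<Longrightarrow> Gr2 (sig r) i \<le> sig r i"
proof -
  assume r: "0 \<le> r"
  show ?thesis
  proof (cases "r = 0")
    case True
    have "sig r = (\<lambda>_. 0)" using True by (simp add: sig_zero fun_eq_iff)
    then show ?thesis using Gr2_zero True by (simp add: sig_zero)
  next
    case False
    then have r0: "0 < r" using r by simp
    obtain k where k: "Rg k \<le> r" "r < Rg (k+1)" using Rg_ex[OF r0] by blast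
    have nn: "nonneg (sig r)" unfolding nonneg_def using sig_nn[OF r] by blast
    have le: "sig r j \<le> w (Sq (k+1)) j" for j
      using sig_piece[of k r j] k pp_le_bb[of "k+1" j] unfolding bb_def by force
    have "Gr2 (sig r) i \<le> Gr2 (w (Sq (k+1))) i" by (rule Gr2_mono[OF nn le])
    also have "\<dots> = aa k i" unfolding aa_def by simp
    also have "\<dots> \<le> pp k i" by (rule pp_ge_aa)
    also have "\<dots> \<le> sig r i" using sig_piece[of k r i] k by auto
    finally show ?thesis .
  qed
qed

end


context PS begin

lemma sig_inv:
  assumes K: "compact K" "K \<subseteq> {0<..}"
  shows "\<exists>l L. 0 < l \<and> l \<le> L \<and> (\<forall>r1\<in>K. \<forall>r2\<in>K. \<forall>i.
           l * \<bar>r1 - r2\<bar> \<le> \<bar>inv_into {0..} (\<lambda>r. sig r i) r1 - inv_into {0..} (\<lambda>r. sig r i) r2\<bar>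
         \<and> \<bar>inv_into {0..} (\<lambda>r. sig r i) r1 - inv_into {0..} (\<lambda>r. sig r i) r2\<bar> \<le> L * \<bar>r1 - r2\<bar>)"
proof (cases "K = {}")
  case True then show ?thesis by (intro exI[of _ 1]) auto
next
  case False
  obtain ylo where ylo: "ylo \<in> K" "\<And>y. y \<in> K \<Longrightarrow> ylo \<le> y" using compact_attains_inf[OF K(1) False] by blast
  obtain yhi where yhi: "yhi \<in> K" "\<And>y. y \<in> K \<Longrightarrow> y \<le> yhi" using compact_attains_sup[OF K(1) False] by blast
  have ylo0: "0 < ylo" using ylo(1) K(2) by auto
  obtain a where a: "\<phi> (Sq a) < ylo" using phi_small[OF ylo0] by blast
  obtain b0 where b0: "yhi < lam b0 * Sq b0" using lamSq_large by blast
  define b where "b = max b0 (a+1)"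
  have ab: "a < b" unfolding b_def by simp
  have bhi: "yhi < lam b * Sq b" using b0 lamSq_mono[of b0 b] unfolding b_def by simp
  define lo where "lo k = (lam (k+1) - lam k) * (mg (Sq k) / 2)" for k
  define hi where "hi k = \<phi> (Sq (k+1))" for k
  define c where "c = Min ((\<lambda>k. lo k / Rg k) ` {a..<b})"
  define C where "C = Max ((\<lambda>k. hi k / Rg k) ` {a..<b})"
  have fin: "finite ((\<lambda>k. lo k / Rg k) ` {a..<b})" "(\<lambda>k. lo k / Rg k) ` {a..<b} \<noteq> {}"
    "finite ((\<lambda>k. hi k / Rg k) ` {a..<b})" "(\<lambda>k. hi k / Rg k) ` {a..<b} \<noteq> {}" using ab by auto
  have lohi: "lo k \<le> pp (k+1) i - pp k i \<and> pp (k+1) i - pp k i \<le> hi k" for k i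
    unfolding lo_def hi_def using pp_inc pp_inc_up by blast
  have lop: "0 < lo k" for k unfolding lo_def using lam_strict[of k] mg_Sq_pos[of k] by simp
  have c0: "0 < c" unfolding c_def using fin lop Rg_pos by (auto simp: Min_gr_iff)
  have ca: "c \<le> lo a / Rg a" unfolding c_def using fin ab by (intro Min_le) auto
  have Ca: "hi a / Rg a \<le> C" unfolding C_def using fin ab by (intro Max_ge) auto
  have "lo a \<le> hi a" using lohi[of a undefined] by linarith
  then have "lo a / Rg a \<le> hi a / Rg a" using Rg_pos[of a] by (simp add: divide_right_mono)
  then have cC: "c \<le> C" using ca Ca by linarith
  have lo_k: "c * Rg k \<le> pp (k+1) i - pp k i" if "a \<le> k" "k < b" for k i
  proof -
    have "c \<le> lo k / Rg k" unfolding c_def using fin that by (intro Min_le) auto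
    then have "c * Rg k \<le> lo k" using Rg_pos[of k] by (simp add: pos_le_divide_eq)
    then show ?thesis using lohi[of k i] by linarith
  qed
  have hi_k: "pp (k+1) i - pp k i \<le> C * Rg k" if "a \<le> k" "k < b" for k i
  proof -
    have "hi k / Rg k \<le> C" unfolding C_def using fin that by (intro Max_ge) auto
    then have "hi k \<le> C * Rg k" using Rg_pos[of k] by (simp add: pos_divide_le_eq)
    then show ?thesis using lohi[of k i] by linarith
  qed
  have main: "(1/C) * \<bar>r1 - r2\<bar> \<le> \<bar>inv_into {0..} (\<lambda>r. sig r i) r1 - inv_into {0..} (\<lambda>r. sig r i) r2\<bar>
       \<and> \<bar>inv_into {0..} (\<lambda>r. sig r i) r1 - inv_into {0..} (\<lambda>r. sig r i) r2\<bar> \<le> (1/c) * \<bar>r1 - r2\<bar>"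
    if r1: "r1 \<in> K" and r2: "r2 \<in> K" for r1 r2 i
  proof -
    have sl: "c * (y - x) \<le> sig y i - sig x i \<and> sig y i - sig x i \<le> C * (y - x)"
      if "Rg a \<le> x" "x \<le> y" "y \<le> Rg b" for x y
      unfolding sig_def by (rule pl_slope[of a b c "\<lambda>k. pp k i" C x y]) (use ab lo_k hi_k that in auto)
    have fA: "sig (Rg a) i < ylo"
      using pp_le_phi[of a i] a unfolding sig_def by (simp add: pl_at)
    have fB: "yhi < sig (Rg b) i"
      using pp_ge[of b i] bhi unfolding sig_def by (simp add: pl_at)
    have y1: "sig (Rg a) i \<le> r1" "r1 \<le> sig (Rg b) i" using ylo(2)[OF r1] yhi(2)[OF r1] fA fB by auto
    have y2: "sig (Rg a) i \<le> r2" "r2 \<le> sig (Rg b) i" using ylo(2)[OF r2] yhi(2)[OF r2] fA fB by auto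
    have RaRb: "0 \<le> Rg a" "Rg a \<le> Rg b" using Rg_pos[of a] Rg_mono[of a b] ab by auto
    show ?thesis by (rule inv_bilip[OF sig_Kinf RaRb c0 cC sl y1 y2])
  qed
  have l1: "0 < 1/C" using c0 cC by simp
  have l2: "1/C \<le> 1/c" using c0 cC by (simp add: frac_le)
  show ?thesis
    apply (rule exI[of _ "1/C"], rule exI[of _ "1/c"])
    apply (intro conjI l1 l2 ballI allI)
    using main by auto
qed

lemma path_exists: "path_strict_decay Ii gam mu sig"
proof -
  have p1: "\<forall>r\<ge>0. sig r \<in> linf_pos" using sig_lp by simp
  have p2: "\<exists>\<rho>. Kinf \<rho> \<and> (\<forall>r\<ge>0. \<forall>i. Gam_rho Ii gam mu \<rho> (sig r) i \<le> sig r i)"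
    using rho2K sig_decay by (intro exI[of _ rho2]) simp
  have p3: "\<exists>\<phi>min \<phi>max. Kinf \<phi>min \<and> Kinf \<phi>max \<and> (\<forall>r\<ge>0. \<forall>i. \<phi>min r \<le> sig r i \<and> sig r i \<le> \<phi>max r)"
    using PLq.pl_Kinf[OF PLq_qmin] PLq.pl_Kinf[OF PLq_qmax] sig_bounds
    by (intro exI[of _ "pl qmin"] exI[of _ "pl qmax"]) simp
  have p4: "\<forall>i. Kinf (\<lambda>r. sig r i)" using sig_Kinf by simp
  have p5: "\<forall>K. compact K \<and> K \<subseteq> {0<..} \<longrightarrow> (\<exists>l L. 0 < l \<and> l \<le> L \<and> (\<forall>r1\<in>K. \<forall>r2\<in>K. \<forall>i.
           l * \<bar>r1 - r2\<bar> \<le> \<bar>inv_into {0..} (\<lambda>r. sig r i) r1 - inv_into {0..} (\<lambda>r. sig r i) r2\<bar>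
         \<and> \<bar>inv_into {0..} (\<lambda>r. sig r i) r1 - inv_into {0..} (\<lambda>r. sig r i) r2\<bar> \<le> L * \<bar>r1 - r2\<bar>))"
  proof (intro allI impI)
    fix K :: "real set" assume "compact K \<and> K \<subseteq> {0<..}"
    then show "\<exists>l L. 0 < l \<and> l \<le> L \<and> (\<forall>r1\<in>K. \<forall>r2\<in>K. \<forall>i.
           l * \<bar>r1 - r2\<bar> \<le> \<bar>inv_into {0..} (\<lambda>r. sig r i) r1 - inv_into {0..} (\<lambda>r. sig r i) r2\<bar>
         \<and> \<bar>inv_into {0..} (\<lambda>r. sig r i) r1 - inv_into {0..} (\<lambda>r. sig r i) r2\<bar> \<le> L * \<bar>r1 - r2\<bar>)"
      using sig_inv[of K] by (elim conjE)
  qed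
  show ?thesis unfolding path_strict_decay_def using p1 p2 p3 p4 p5 by (intro conjI)
qed

end

theorem theorem3p13:
  fixes Ii :: "'i::countable \<Rightarrow> 'i set"
    and gam :: "'i \<Rightarrow> 'i \<Rightarrow> real \<Rightarrow> real"
    and mu :: "'i \<Rightarrow> ('i \<Rightarrow> real) \<Rightarrow> ereal"
    and \<rho> :: "real \<Rightarrow> real"
  assumes "gain_operator Ii gam mu"
    and "Kinf \<rho>"
    and "oplus_MBI (Gam_rho Ii gam mu \<rho>)"
    and "\<forall>r\<ge>0. sigma_star_exists Ii gam mu \<rho> r \<and> glob_attr_fixpoint (\<lambda>s. oplus (\<lambda>_. r) (Gam_rho Ii gam mu \<rho> s))
                 (sigma_star Ii gam mu \<rho> r)"
  shows "\<exists>\<sigma>. path_strict_decay Ii gam mu \<sigma>"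
proof -
  note g = assms(1)[unfolded gain_operator_def]
  note g1 = g[THEN conjunct1]
  note g2 = g[THEN conjunct2, THEN conjunct1]
  note g3 = g[THEN conjunct2, THEN conjunct2, THEN conjunct1]
  note g4 = g[THEN conjunct2, THEN conjunct2, THEN conjunct2, THEN conjunct1]
  note g5 = g[THEN conjunct2, THEN conjunct2, THEN conjunct2, THEN conjunct2, THEN conjunct1]
  note g6 = g[THEN conjunct2, THEN conjunct2, THEN conjunct2, THEN conjunct2, THEN conjunct2, THEN conjunct1]
  note g7 = g[THEN conjunct2, THEN conjunct2, THEN conjunct2, THEN conjunct2, THEN conjunct2, THEN conjunct2, THEN conjunct1]
  note g8 = g[THEN conjunct2, THEN conjunct2, THEN conjunct2, THEN conjunct2, THEN conjunct2, THEN conjunct2, THEN conjunct2]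
  obtain \<xi> where xi: "Kinf \<xi>" "\<forall>i. mu i (\<lambda>_. 0) = 0 \<and> (\<forall>s\<in>linf_pos. ereal (\<xi> (supnorm s)) \<le> mu i s)"
    using g5 by (elim exE conjE)
  obtain \<phi> where phi: "Kinf \<phi>" "\<forall>s\<in>linf_pos. \<forall>b\<in>linf_pos.
      (\<forall>i. s i \<le> oplus b (Gam_rho Ii gam mu \<rho> s) i) \<longrightarrow> supnorm s \<le> \<phi> (supnorm b)"
    using assms(3) unfolding oplus_MBI_def by (elim exE conjE)
  interpret PS Ii gam mu \<rho> \<phi> \<xi>
  proof
    show "\<And>i. finite (Ii i)" using g1 by simp
    show "\<And>i j. j \<in> Ii i \<Longrightarrow> Kinf (gam i j)" using g2 by simp
    show "\<forall>r\<ge>0. \<forall>\<epsilon>>0. \<exists>\<delta>>0. \<forall>i. \<forall>j\<in>Ii i. \<forall>r'\<ge>0.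
          \<bar>r' - r\<bar> < \<delta> \<longrightarrow> \<bar>gam i j r' - gam i j r\<bar> < \<epsilon>" by (rule g3)
    show "\<And>i s. s \<in> linf_pos \<Longrightarrow> 0 \<le> mu i s" using g4 by simp
    show "Kinf \<xi>" by (rule xi(1))
    show "\<And>i. mu i (\<lambda>_. 0) = 0" using xi(2) by simp
    show "\<And>i s. s \<in> linf_pos \<Longrightarrow> ereal (\<xi> (supnorm s)) \<le> mu i s" using xi(2) by simp
    show "\<And>i s t. s \<in> linf_pos \<Longrightarrow> t \<in> linf_pos \<Longrightarrow> \<forall>k. s k \<le> t k \<Longrightarrow> mu i s \<le> mu i t"
      using g6 by simp
    show "\<And>i J s. finite J \<Longrightarrow> s \<in> linf_pos \<Longrightarrow> \<forall>k. k \<notin> J \<longrightarrow> s k = 0 \<Longrightarrow> mu i s \<noteq> \<infinity>"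
    proof -
      fix i and J :: "'i set" and s :: "'i \<Rightarrow> real" assume "finite J" "s \<in> linf_pos" "\<forall>k. k \<notin> J \<longrightarrow> s k = 0"
      then have "mu i s \<noteq> \<infinity> \<and> (\<forall>\<epsilon>>0. \<exists>\<delta>>0. \<forall>t\<in>linf_pos.
                       (\<forall>k. k \<notin> J \<longrightarrow> t k = 0) \<longrightarrow>
                       supnorm (\<lambda>k. t k - s k) < \<delta> \<longrightarrow>
                       \<bar>real_of_ereal (mu i t) - real_of_ereal (mu i s)\<bar> < \<epsilon>)"
        using g7[rule_format, of J s i] by simp
      then show "mu i s \<noteq> \<infinity>" by (rule conjunct1)
    qed
    show "\<forall>A \<subseteq> linf_pos. (\<exists>R. \<forall>s\<in>A. supnorm s \<le> R) \<longrightarrow>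
        (\<forall>\<epsilon>>0. \<exists>\<delta>>0. \<forall>s0\<in>A. \<forall>s\<in>linf_pos. supnorm (\<lambda>k. s k - s0 k) \<le> \<delta> \<longrightarrow>
           (\<forall>i. \<bar>real_of_ereal (mu i (restr s (Ii i))) - real_of_ereal (mu i (restr s0 (Ii i)))\<bar> \<le> \<epsilon>))"
      by (rule g8)
    show "Kinf \<rho>" by (rule assms(2))
    show "Kinf \<phi>" by (rule phi(1))
    show "\<And>s b. s\<in>linf_pos \<Longrightarrow> b\<in>linf_pos \<Longrightarrow>
      \<forall>i. s i \<le> oplus b (Gam_rho Ii gam mu \<rho> s) i \<Longrightarrow> supnorm s \<le> \<phi> (supnorm b)"
      using phi(2) by simp
    show "\<And>r. r \<ge> 0 \<Longrightarrow> glob_attr_fixpoint (\<lambda>s. oplus (\<lambda>_. r) (Gam_rho Ii gam mu \<rho> s))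
                 (sigma_star Ii gam mu \<rho> r)" using assms(4) by simp
  qed
  show ?thesis by (rule exI[of _ sig], rule path_exists)
qed


end
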